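(* For every $T>0$, the control operator $W^T:\mathcal F^T\to L_2(-T,T)$, $W^TF:=u^F(\cdot,T)$, is a bounded linear bijection with bounded inverse. In particular the reachable set $U^T:=\{u^F(\cdot,T):F\in\mathcal F^T\}$ equals $L_2(-T,T)$.
   Context: Let $q\in C^2(\mathbb R)\cap L_1(\mathbb R)$ be real-valued. Let $w_1,w_2$ be real functions on $\{(x,t):|x|\le t\}$, continuous on each closed wedge $\{0\le x\le t\}$ and $\{-t\le x\le0\}$ (they are the kernels of the representation formula for the wave equation $u_{tt}-u_{xx}+q(x)u=0$, $x\ne0$, with transmission control at $x=0$; only their continuity matters here). Let $\mathcal F^T:=L_2(0,T;\mathbb R^2)$. For $F=(f_1,f_2)^\top\in\mathcal F^T$, $u^F(\cdot,T)\in L_2(-T,T)$ is defined by $u^F(x,T)=\tfrac12 f_1(T-x)-\tfrac12 f_2(T-x)+\int_x^T(w_1(x,s)f_1(T-s)+w_2(x,s)f_2(T-s))ds$ for $0<x<T$, and $u^F(x,T)=-\tfrac12 f_1(T+x)-\tfrac12 f_2(T+x)+\int_{-x}^T(w_1(x,s)f_1(T-s)+w_2(x,s)f_2(T-s))ds$ for $-T<x<0$. *)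

theory Defs
  imports "HOL-Analysis.Analysis"
begin

definition sq_int :: "real set \<Rightarrow> (real \<Rightarrow> real) \<Rightarrow> bool" where
  "sq_int S f \<longleftrightarrow> set_borel_measurable lborel S f \<and>
      set_integrable lborel S (\<lambda>x. (f x)\<^sup>2)"

definition l2_norm :: "real set \<Rightarrow> (real \<Rightarrow> real) \<Rightarrow> real" where
  "l2_norm S f = sqrt (LINT x:S|lborel. (f x)\<^sup>2)"

definition ctrl_space :: "real \<Rightarrow> ((real \<Rightarrow> real) \<times> (real \<Rightarrow> real)) set" where
  "ctrl_space T = {F. sq_int {0<..<T} (fst F) \<and> sq_int {0<..<T} (snd F)}"

definition ctrl_norm :: "real \<Rightarrow> (real \<Rightarrow> real) \<times> (real \<Rightarrow> real) \<Rightarrow> real" where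
  "ctrl_norm T F = sqrt (LINT t:{0<..<T}|lborel. (fst F t)\<^sup>2 + (snd F t)\<^sup>2)"

text \<open>The kernels w1, w2 are given separately on the right wedge {0 \<le> x \<le> t}
  (w1p, w2p) and on the left wedge {-t \<le> x \<le> 0} (w1m, w2m), since they may
  have different (one-sided) values on the line x = 0.
  The control operator W^T F = u^F(.,T), as a function on (-T,T) (value 0 elsewhere).\<close>
definition uF :: "(real \<Rightarrow> real \<Rightarrow> real) \<Rightarrow> (real \<Rightarrow> real \<Rightarrow> real) \<Rightarrow>
    (real \<Rightarrow> real \<Rightarrow> real) \<Rightarrow> (real \<Rightarrow> real \<Rightarrow> real) \<Rightarrow>
    real \<Rightarrow> (real \<Rightarrow> real) \<times> (real \<Rightarrow> real) \<Rightarrow> real \<Rightarrow> real" where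
  "uF w1p w2p w1m w2m T F x =
     (if 0 < x \<and> x < T then
        (1/2) * fst F (T - x) - (1/2) * snd F (T - x)
        + (LINT s:{x..T}|lborel. w1p x s * fst F (T - s) + w2p x s * snd F (T - s))
      else if -T < x \<and> x < 0 then
        -(1/2) * fst F (T + x) - (1/2) * snd F (T + x)
        + (LINT s:{-x..T}|lborel. w1m x s * fst F (T - s) + w2m x s * snd F (T - s))
      else 0)"

end

theory Submission
  imports Defs
begin


definition Vop :: "(real \<Rightarrow> real \<Rightarrow> real) \<Rightarrow> (real \<Rightarrow> real \<Rightarrow> real) \<Rightarrow> (real \<Rightarrow> real) \<Rightarrow> (real \<Rightarrow> real) \<Rightarrow> real \<Rightarrow> real" where
  "Vop k l p q \<tau> = (\<integral>\<sigma>. k \<tau> \<sigma> * p \<sigma> + l \<tau> \<sigma> * q \<sigma> \<partial>lborel)"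

definition kern :: "real \<Rightarrow> real \<Rightarrow> (real \<Rightarrow> real \<Rightarrow> real) \<Rightarrow> bool" where
  "kern T M k \<longleftrightarrow> (\<lambda>z. k (fst z) (snd z)) \<in> borel_measurable borel \<and> (\<forall>t s. \<bar>k t s\<bar> \<le> M)
     \<and> (\<forall>t s. k t s \<noteq> 0 \<longrightarrow> 0 \<le> s \<and> s \<le> t \<and> t \<le> T)"

lemma kern_meas2:
  assumes "kern T M k" "p \<in> borel_measurable lborel"
  shows "case_prod (\<lambda>t s. k t s * p s) \<in> borel_measurable (lborel \<Otimes>\<^sub>M lborel)"
proof -
  have k: "(\<lambda>z. k (fst z) (snd z)) \<in> borel_measurable (lborel \<Otimes>\<^sub>M lborel)"
    using assms(1) unfolding kern_def lborel_prod by (simp add: measurable_lborel1)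
  have "(\<lambda>z. p (snd z)) \<in> borel_measurable (lborel \<Otimes>\<^sub>M lborel)"
    using assms(2) by measurable
  with k have "(\<lambda>z. k (fst z) (snd z) * p (snd z)) \<in> borel_measurable (lborel \<Otimes>\<^sub>M lborel)"
    by (rule borel_measurable_times)
  then show ?thesis by (simp add: case_prod_beta')
qed

lemma kern_sec:
  assumes "kern T M k"
  shows "k t \<in> borel_measurable lborel"
proof -
  have [measurable]: "(\<lambda>z. k (fst z) (snd z)) \<in> borel_measurable (lborel \<Otimes>\<^sub>M lborel)"
    using assms(1) unfolding kern_def lborel_prod by (simp add: measurable_lborel1)
  have "(\<lambda>s. (\<lambda>z. k (fst z) (snd z)) (t, s)) \<in> borel_measurable lborel"
    by measurable
  then show ?thesis by simp
qed

lemma int_ind_Icc: "integrable lborel (indicator {a..b::real} :: real \<Rightarrow> real)"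
  by (rule integrable_real_indicator) (auto simp: emeasure_lborel_Icc_eq)

lemma int_mult_ind:
  fixes f :: "real \<Rightarrow> real"
  shows "integrable lborel f \<Longrightarrow> A \<in> sets borel \<Longrightarrow> integrable lborel (\<lambda>x. indicator A x * f x)"
  using integrable_mult_indicator[of A lborel f] by simp

lemma kern_M: "kern T M k \<Longrightarrow> M \<ge> 0"
  unfolding kern_def by (meson abs_ge_zero order_trans)

lemma kern_zero: "kern T M k \<Longrightarrow> \<not> (0 \<le> s \<and> s \<le> t \<and> t \<le> T) \<Longrightarrow> k t s = 0"
  unfolding kern_def by blast

lemma kern_abs: "kern T M k \<Longrightarrow> \<bar>k t s\<bar> \<le> M"
  unfolding kern_def by blast

lemma kern_abs_ind: "kern T M k \<Longrightarrow> \<bar>k t s\<bar> \<le> M * indicator {0..t} s"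
  using kern_abs[of T M k t s] kern_zero[of T M k s t] by (auto simp: indicator_def)

lemma Vop_meas:
  assumes "kern T M k" "kern T M l" "p \<in> borel_measurable lborel" "q \<in> borel_measurable lborel"
  shows "Vop k l p q \<in> borel_measurable lborel"
proof -
  have a: "case_prod (\<lambda>t s. k t s * p s) \<in> borel_measurable (lborel \<Otimes>\<^sub>M lborel)"
    using kern_meas2 assms by blast
  have b: "case_prod (\<lambda>t s. l t s * q s) \<in> borel_measurable (lborel \<Otimes>\<^sub>M lborel)"
    using kern_meas2 assms by blast
  have "case_prod (\<lambda>t s. k t s * p s + l t s * q s) \<in> borel_measurable (lborel \<Otimes>\<^sub>M lborel)"
    using borel_measurable_add[OF a b] by (simp add: case_prod_beta')
  then show ?thesis unfolding Vop_def[abs_def]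
    by (rule lborel.borel_measurable_lebesgue_integral)
qed

lemma kern_int:
  assumes "kern T M k" "integrable lborel p"
  shows "integrable lborel (\<lambda>s. k t s * p s)"
proof (rule Bochner_Integration.integrable_bound[of lborel "\<lambda>s. M * p s"])
  show "integrable lborel (\<lambda>s. M * p s)" using assms(2) by simp
  show "(\<lambda>s. k t s * p s) \<in> borel_measurable lborel"
    using kern_sec[OF assms(1)] assms(2) by measurable
  show "AE x in lborel. norm (k t x * p x) \<le> norm (M * p x)"
    using kern_abs[OF assms(1)] kern_M[OF assms(1)] by (auto simp: abs_mult intro!: mult_right_mono)
qed

lemma Vop_bound:
  assumes "kern T M k" "kern T M l" "integrable lborel p" "integrable lborel q"
  shows "\<bar>Vop k l p q t\<bar> \<le> M * (\<integral>s. indicator {0..t} s * (\<bar>p s\<bar> + \<bar>q s\<bar>) \<partial>lborel)"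
proof -
  have "\<bar>Vop k l p q t\<bar> \<le> (\<integral>s. \<bar>k t s * p s + l t s * q s\<bar> \<partial>lborel)"
    unfolding Vop_def using integral_norm_bound[of lborel "\<lambda>s. k t s * p s + l t s * q s"] by simp
  also have "\<dots> \<le> (\<integral>s. M * (indicator {0..t} s * (\<bar>p s\<bar> + \<bar>q s\<bar>)) \<partial>lborel)"
  proof (rule integral_mono')
    show "integrable lborel (\<lambda>s. M * (indicator {0..t} s * (\<bar>p s\<bar> + \<bar>q s\<bar>)))"
      using assms(3,4) by (intro integrable_mult_right int_mult_ind) auto
    fix s
    have M: "M \<ge> 0" using kern_abs[OF assms(1)] by (meson abs_ge_zero order_trans)
    have "\<bar>k t s * p s\<bar> \<le> M * indicator {0..t} s * \<bar>p s\<bar>"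
      using kern_abs_ind[OF assms(1)] by (simp add: abs_mult mult_right_mono)
    moreover have "\<bar>l t s * q s\<bar> \<le> M * indicator {0..t} s * \<bar>q s\<bar>"
      using kern_abs_ind[OF assms(2)] by (simp add: abs_mult mult_right_mono)
    ultimately show "\<bar>k t s * p s + l t s * q s\<bar> \<le> M * (indicator {0..t} s * (\<bar>p s\<bar> + \<bar>q s\<bar>))"
      by (simp add: algebra_simps)
    show "0 \<le> M * (indicator {0..t} s * (\<bar>p s\<bar> + \<bar>q s\<bar>))" using M by simp
  qed
  finally show ?thesis by simp
qed

lemma Vop_zero:
  assumes "kern T M k" "kern T M l" "t \<notin> {0..T}"
  shows "Vop k l p q t = 0"
proof -
  have "\<And>s. k t s = 0" "\<And>s. l t s = 0" using kern_zero[OF assms(1)] kern_zero[OF assms(2)] assms(3) by auto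
  then show ?thesis unfolding Vop_def by simp
qed

lemma ind_L1_le:
  fixes p q :: "real \<Rightarrow> real"
  assumes "integrable lborel p" "integrable lborel q"
  shows "(\<integral>s. indicator A s * (\<bar>p s\<bar> + \<bar>q s\<bar>) \<partial>lborel) \<le> (\<integral>s. \<bar>p s\<bar> + \<bar>q s\<bar> \<partial>lborel)"
  by (rule integral_mono'[where f="\<lambda>s. \<bar>p s\<bar> + \<bar>q s\<bar>"]) (use assms in \<open>auto simp: indicator_def\<close>)

lemma Vop_bound2:
  assumes "kern T M k" "kern T M l" "integrable lborel p" "integrable lborel q"
  shows "\<bar>Vop k l p q t\<bar> \<le> M * (\<integral>s. \<bar>p s\<bar> + \<bar>q s\<bar> \<partial>lborel) * indicator {0..T} t"
proof (cases "t \<in> {0..T}")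
  case True
  have M: "M \<ge> 0" using kern_abs[OF assms(1)] by (meson abs_ge_zero order_trans)
  show ?thesis using True Vop_bound[OF assms, of t] ind_L1_le[OF assms(3,4), of "{0..t}"] M
    by (smt (verit) indicator_simps(1) mult_cancel_left1 mult_left_mono)
next
  case False then show ?thesis using Vop_zero[OF assms(1,2)] by simp
qed

lemma Vop_integrable:
  assumes "kern T M k" "kern T M l" "integrable lborel p" "integrable lborel q"
  shows "integrable lborel (Vop k l p q)"
proof (rule Bochner_Integration.integrable_bound[of lborel "\<lambda>t. M * (\<integral>s. \<bar>p s\<bar> + \<bar>q s\<bar> \<partial>lborel) * indicator {0..T} t"])
  show "integrable lborel (\<lambda>t. M * (\<integral>s. \<bar>p s\<bar> + \<bar>q s\<bar> \<partial>lborel) * indicator {0..T} t)"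
    by (rule integrable_mult_right[OF int_ind_Icc])
  show "Vop k l p q \<in> borel_measurable lborel" using Vop_meas assms by blast
  have M: "M \<ge> 0" using kern_abs[OF assms(1)] by (meson abs_ge_zero order_trans)
  have "0 \<le> (\<integral>s. \<bar>p s\<bar> + \<bar>q s\<bar> \<partial>lborel)" by (rule integral_nonneg_AE) auto
  then show "AE x in lborel. norm (Vop k l p q x) \<le> norm (M * (\<integral>s. \<bar>p s\<bar> + \<bar>q s\<bar> \<partial>lborel) * indicator {0..T} x)"
    using Vop_bound2[OF assms] M by (auto simp: abs_mult)
qed

lemma Vop_cong_AE:
  assumes "kern T M k" "kern T M l" "p \<in> borel_measurable lborel" "q \<in> borel_measurable lborel"
     "p' \<in> borel_measurable lborel" "q' \<in> borel_measurable lborel"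
     "AE s in lborel. p s = p' s" "AE s in lborel. q s = q' s"
  shows "Vop k l p q t = Vop k l p' q' t"
  unfolding Vop_def
  apply (rule integral_cong_AE)
  using kern_sec[OF assms(1)] kern_sec[OF assms(2)] assms(3-6) apply measurable
  using assms(7,8) by eventually_elim simp

lemma Vop_lin:
  assumes "kern T M k" "kern T M l" "integrable lborel p" "integrable lborel q"
    "integrable lborel p'" "integrable lborel q'"
  shows "Vop k l (\<lambda>s. a * p s + b * p' s) (\<lambda>s. a * q s + b * q' s) t = a * Vop k l p q t + b * Vop k l p' q' t"
proof -
  have i: "integrable lborel (\<lambda>s. k t s * p s)" "integrable lborel (\<lambda>s. k t s * p' s)"
    "integrable lborel (\<lambda>s. l t s * q s)" "integrable lborel (\<lambda>s. l t s * q' s)"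
    using kern_int assms by blast+
  have "Vop k l (\<lambda>s. a * p s + b * p' s) (\<lambda>s. a * q s + b * q' s) t =
    (\<integral>s. a * (k t s * p s + l t s * q s) + b * (k t s * p' s + l t s * q' s) \<partial>lborel)"
    unfolding Vop_def by (rule Bochner_Integration.integral_cong) (auto simp: algebra_simps)
  also have "\<dots> = a * Vop k l p q t + b * Vop k l p' q' t"
    unfolding Vop_def using i by simp
  finally show ?thesis .
qed




definition Int2 :: "(real \<Rightarrow> real) \<times> (real \<Rightarrow> real) \<Rightarrow> bool" where
  "Int2 P \<longleftrightarrow> integrable lborel (fst P) \<and> integrable lborel (snd P)"

definition Nrm :: "(real \<Rightarrow> real) \<times> (real \<Rightarrow> real) \<Rightarrow> real \<Rightarrow> real" where
  "Nrm P t = \<bar>fst P t\<bar> + \<bar>snd P t\<bar>"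

definition L1 :: "(real \<Rightarrow> real) \<times> (real \<Rightarrow> real) \<Rightarrow> real" where
  "L1 P = (\<integral>s. Nrm P s \<partial>lborel)"

lemma L1_nonneg: "L1 P \<ge> 0"
  unfolding L1_def Nrm_def by (rule integral_nonneg_AE) auto

lemma Nrm_int: "Int2 P \<Longrightarrow> integrable lborel (Nrm P)"
  unfolding Int2_def Nrm_def[abs_def] by auto

locale volt =
  fixes T M :: real and k11 k12 k21 k22 :: "real \<Rightarrow> real \<Rightarrow> real"
  assumes T: "T > 0" and k11: "kern T M k11" and k12: "kern T M k12"
    and k21: "kern T M k21" and k22: "kern T M k22"
begin

lemma M: "M \<ge> 0" using kern_M[OF k11] .

definition Kp :: "(real \<Rightarrow> real) \<times> (real \<Rightarrow> real) \<Rightarrow> (real \<Rightarrow> real) \<times> (real \<Rightarrow> real)" where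
  "Kp P = (Vop k11 k12 (fst P) (snd P), Vop k21 k22 (fst P) (snd P))"

lemma Kp_Int2: "Int2 P \<Longrightarrow> Int2 (Kp P)"
  unfolding Int2_def Kp_def using Vop_integrable k11 k12 k21 k22 by simp

lemma Kit_Int2: "Int2 P \<Longrightarrow> Int2 ((Kp ^^ n) P)"
  by (induction n) (auto intro: Kp_Int2)

lemma Kp_Nrm:
  assumes "Int2 P"
  shows "Nrm (Kp P) t \<le> 2 * M * (\<integral>s. indicator {0..t} s * Nrm P s \<partial>lborel)"
  using Vop_bound[OF k11 k12, of "fst P" "snd P" t] Vop_bound[OF k21 k22, of "fst P" "snd P" t] assms
  unfolding Kp_def Nrm_def Int2_def by simp

lemma Kp_supp: "t \<notin> {0..T} \<Longrightarrow> fst (Kp P) t = 0 \<and> snd (Kp P) t = 0"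
  unfolding Kp_def using Vop_zero k11 k12 k21 k22 by simp

lemma Kit_supp: "t \<notin> {0..T} \<Longrightarrow> fst ((Kp ^^ Suc n) P) t = 0 \<and> snd ((Kp ^^ Suc n) P) t = 0"
  using Kp_supp by simp

lemma pow_int: "integrable lborel (\<lambda>s::real. indicator {0..t::real} s * ((c::real) * s ^ n))"
proof -
  have "integrable lborel (\<lambda>x. c * x ^ n * indicator {0..t} x)"
    using borel_integrable_atLeastAtMost[of 0 t "\<lambda>x. c * x ^ n"] by simp
  then show ?thesis by (simp add: mult_ac)
qed

lemma Kit_bound:
  assumes "Int2 P" "t \<in> {0..T}"
  shows "Nrm ((Kp ^^ Suc n) P) t \<le> (2*M) ^ Suc n * t ^ n / fact n * L1 P"
  using assms(2)
proof (induction n arbitrary: t)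
  case 0
  have "Nrm (Kp P) t \<le> 2 * M * (\<integral>s. indicator {0..t} s * Nrm P s \<partial>lborel)"
    by (rule Kp_Nrm[OF assms(1)])
  also have "\<dots> \<le> 2 * M * L1 P"
    unfolding L1_def Nrm_def using ind_L1_le[of "fst P" "snd P" "{0..t}"] assms(1) M
    by (auto simp: Int2_def intro!: mult_left_mono)
  finally show ?case by simp
next
  case (Suc n)
  let ?Q = "(Kp ^^ Suc n) P"
  let ?c = "(2*M) ^ Suc n / fact n * L1 P"
  have Q: "Int2 ?Q" using Kit_Int2[OF assms(1)] .
  have "Nrm (Kp ?Q) t \<le> 2 * M * (\<integral>s. indicator {0..t} s * Nrm ?Q s \<partial>lborel)"
    by (rule Kp_Nrm[OF Q])
  also have "(\<integral>s. indicator {0..t} s * Nrm ?Q s \<partial>lborel) \<le> (\<integral>s. indicator {0..t} s * (?c * s ^ n) \<partial>lborel)"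
  proof (rule integral_mono'[where f="\<lambda>s. indicator {0..t} s * (?c * s ^ n)"])
    show "integrable lborel (\<lambda>s. indicator {0..t} s * (?c * s ^ n))" by (rule pow_int)
    fix s
    show "indicator {0..t} s * Nrm ?Q s \<le> indicator {0..t} s * (?c * s ^ n)"
    proof (cases "s \<in> {0..t}")
      case True
      then have "s \<in> {0..T}" using Suc.prems by auto
      from Suc.IH[OF this] show ?thesis using True by (simp add: ac_simps)
    qed simp
    show "0 \<le> indicator {0..t} s * (?c * s ^ n)"
      using M L1_nonneg by (auto simp: indicator_def)
  qed
  also have "(\<integral>s. indicator {0..t} s * (?c * s ^ n) \<partial>lborel) = (\<integral>s. ?c * (s ^ n * indicator {0..t} s) \<partial>lborel)"
    by (rule Bochner_Integration.integral_cong) (simp_all add: mult_ac)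
  also have "\<dots> = ?c * (\<integral>s. s ^ n * indicator {0..t} s \<partial>lborel)"
    by (rule integral_mult_right_zero)
  also have "(\<integral>s. s ^ n * indicator {0..t} s \<partial>lborel) = t ^ Suc n / Suc n"
    using integral_power[of 0 t n] Suc.prems by simp
  finally have "Nrm (Kp ?Q) t \<le> 2 * M * (?c * (t ^ Suc n / Suc n))"
    using M by (simp add: mult_left_mono)
  also have "\<dots> = (2*M) ^ Suc (Suc n) * t ^ Suc n / fact (Suc n) * L1 P"
    by (simp add: field_simps)
  finally show ?case by simp
qed

definition cn :: "nat \<Rightarrow> real" where "cn n = (2*M) ^ Suc n * T ^ n / fact n"

lemma cn_nonneg: "cn n \<ge> 0" unfolding cn_def using M T by simp

lemma summable_cn: "summable cn"
proof -
  have "summable (\<lambda>n. 2 * M * (inverse (fact n) * (2 * M * T) ^ n))"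
    by (intro summable_mult summable_exp)
  then show ?thesis unfolding cn_def by (simp add: field_simps power_mult_distrib)
qed

lemma Kit_unif:
  assumes "Int2 P"
  shows "Nrm ((Kp ^^ Suc n) P) t \<le> cn n * L1 P * indicator {0..T} t"
proof (cases "t \<in> {0..T}")
  case True
  have "Nrm ((Kp ^^ Suc n) P) t \<le> (2*M) ^ Suc n * t ^ n / fact n * L1 P"
    by (rule Kit_bound[OF assms True])
  also have "\<dots> \<le> cn n * L1 P" unfolding cn_def
    using True M L1_nonneg[of P] by (auto intro!: mult_right_mono divide_right_mono mult_left_mono power_mono)
  finally show ?thesis using True by simp
next
  case False then show ?thesis using Kit_supp[OF False] by (simp add: Nrm_def)
qed

end



lemma summable_cmp2:
  fixes f f' :: "nat \<Rightarrow> real"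
  assumes "summable g" "\<And>n. \<bar>f n\<bar> + \<bar>f' n\<bar> \<le> g n"
  shows "summable f" "summable f'"
proof -
  have a: "norm (f n) \<le> g n" "norm (f' n) \<le> g n" for n
    using assms(2)[of n] abs_ge_zero[of "f' n"] abs_ge_zero[of "f n"] by simp_all
  show "summable f" by (rule summable_comparison_test'[OF assms(1), of 0]) (rule a)
  show "summable f'" by (rule summable_comparison_test'[OF assms(1), of 0]) (rule a)
qed

lemma summable_cmp:
  fixes f :: "nat \<Rightarrow> real"
  assumes "summable g" "\<And>n. \<bar>f n\<bar> \<le> g n"
  shows "summable f"
  by (rule summable_comparison_test'[OF assms(1), of 0]) (use assms(2) in simp)

lemma Vop_suminf:
  assumes k: "kern T M k" and l: "kern T M l"
    and iu: "\<And>n. integrable lborel (u n)" and iv: "\<And>n. integrable lborel (v n)"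
    and bd: "\<And>n s. \<bar>u n s\<bar> + \<bar>v n s\<bar> \<le> b n * indicator {0..T} s"
    and b0: "\<And>n. b n \<ge> 0" and sb: "summable b"
  shows "Vop k l (\<lambda>s. \<Sum>n. u n s) (\<lambda>s. \<Sum>n. v n s) t = (\<Sum>n. Vop k l (u n) (v n) t)"
proof -
  have M: "M \<ge> 0" using kern_M[OF k] .
  have su: "summable (\<lambda>n. u n s)" and sv: "summable (\<lambda>n. v n s)" for s
  proof -
    have sg: "summable (\<lambda>n. b n * indicator {0..T} s)" using sb by (rule summable_mult2)
    show "summable (\<lambda>n. u n s)" "summable (\<lambda>n. v n s)"
      using summable_cmp2[OF sg bd[of _ s]] by auto
  qed
  let ?f = "\<lambda>n s. k t s * u n s + l t s * v n s"
  have fb: "\<bar>?f n s\<bar> \<le> M * b n * indicator {0..T} s" for n s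
  proof -
    have "\<bar>?f n s\<bar> \<le> \<bar>k t s * u n s\<bar> + \<bar>l t s * v n s\<bar>" by (rule abs_triangle_ineq)
    also have "\<dots> = \<bar>k t s\<bar> * \<bar>u n s\<bar> + \<bar>l t s\<bar> * \<bar>v n s\<bar>" by (simp add: abs_mult)
    also have "\<dots> \<le> M * \<bar>u n s\<bar> + M * \<bar>v n s\<bar>"
      using kern_abs[OF k] kern_abs[OF l] by (intro add_mono mult_right_mono) auto
    also have "\<dots> \<le> M * (b n * indicator {0..T} s)" using mult_left_mono[OF bd[of n s] M]
      by (simp add: distrib_left)
    finally show ?thesis by simp
  qed
  have eq: "k t s * (\<Sum>n. u n s) + l t s * (\<Sum>n. v n s) = (\<Sum>n. ?f n s)" for s
    using su[of s] sv[of s] by (simp add: suminf_mult[symmetric] suminf_add)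
  have "Vop k l (\<lambda>s. \<Sum>n. u n s) (\<lambda>s. \<Sum>n. v n s) t = (\<integral>s. (\<Sum>n. ?f n s) \<partial>lborel)"
    unfolding Vop_def using eq by simp
  also have "\<dots> = (\<Sum>n. integral\<^sup>L lborel (?f n))"
  proof (rule integral_suminf)
    show "integrable lborel (?f n)" for n using kern_int[OF k iu] kern_int[OF l iv] by simp
    show "AE s in lborel. summable (\<lambda>n. norm (?f n s))"
    proof (rule AE_I2)
      fix s
      have "summable (\<lambda>n. M * b n * indicator {0..T} s)" by (intro summable_mult2 summable_mult sb)
      then show "summable (\<lambda>n. norm (?f n s))"
        by (rule summable_cmp) (use fb in auto)
    qed
    let ?L = "\<integral>s. indicator {0..T} s \<partial>lborel :: real"
    have "summable (\<lambda>n. M * b n * ?L)" by (intro summable_mult2 summable_mult sb)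
    then show "summable (\<lambda>n. \<integral>s. norm (?f n s) \<partial>lborel)"
    proof (rule summable_cmp)
      fix n
      have "(\<integral>s. norm (?f n s) \<partial>lborel) \<le> (\<integral>s. M * b n * indicator {0..T} s \<partial>lborel)"
      proof (rule integral_mono'[where f="\<lambda>s. M * b n * indicator {0..T} s"])
        show "integrable lborel (\<lambda>s. M * b n * indicator {0..T} s)"
          by (rule integrable_mult_right[OF int_ind_Icc])
        show "norm (?f n s) \<le> M * b n * indicator {0..T} s" for s using fb[where n=n and s=s] by simp
        show "0 \<le> M * b n * indicator {0..T} s" for s using M b0[of n] by simp
      qed
      also have "\<dots> = M * b n * ?L" by (rule integral_mult_right_zero)
      finally show "\<bar>\<integral>s. norm (?f n s) \<partial>lborel\<bar> \<le> M * b n * ?L"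
        by (simp add: integral_nonneg_AE)
    qed
  qed
  also have "\<dots> = (\<Sum>n. Vop k l (u n) (v n) t)" unfolding Vop_def by simp
  finally show ?thesis .
qed

lemma Vop_add:
  assumes "kern T M k" "kern T M l" "integrable lborel p" "integrable lborel q"
    "integrable lborel p'" "integrable lborel q'"
  shows "Vop k l (\<lambda>s. p s + p' s) (\<lambda>s. q s + q' s) t = Vop k l p q t + Vop k l p' q' t"
  using Vop_lin[OF assms, of 1 1 t] by simp

lemma Vop_diff:
  assumes "kern T M k" "kern T M l" "integrable lborel p" "integrable lborel q"
    "integrable lborel p'" "integrable lborel q'"
  shows "Vop k l (\<lambda>s. p s - p' s) (\<lambda>s. q s - q' s) t = Vop k l p q t - Vop k l p' q' t"
  using Vop_lin[OF assms, of 1 "-1" t] by simp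

context volt begin

definition R1 where "R1 h t = (\<Sum>n. fst ((Kp ^^ Suc n) h) t)"
definition R2 where "R2 h t = (\<Sum>n. snd ((Kp ^^ Suc n) h) t)"
definition Sol where "Sol h = (\<lambda>t. fst h t + R1 h t, \<lambda>t. snd h t + R2 h t)"
definition Cs where "Cs = suminf cn"

lemma R_bound:
  assumes h: "Int2 h"
  shows "\<bar>R1 h t\<bar> + \<bar>R2 h t\<bar> \<le> Cs * L1 h * indicator {0..T} t"
proof -
  have b: "\<bar>fst ((Kp ^^ Suc n) h) t\<bar> + \<bar>snd ((Kp ^^ Suc n) h) t\<bar> \<le> cn n * (L1 h * indicator {0..T} t)" for n
    using Kit_unif[OF h, of n t] by (simp add: Nrm_def mult_ac)
  have sb: "summable (\<lambda>n. cn n * (L1 h * indicator {0..T} t))" by (intro summable_mult2 summable_cn)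
  have s1: "summable (\<lambda>n. \<bar>fst ((Kp ^^ Suc n) h) t\<bar>)"
    by (rule summable_cmp2(1)[OF sb]) (use b in simp)
  have s2: "summable (\<lambda>n. \<bar>snd ((Kp ^^ Suc n) h) t\<bar>)"
    by (rule summable_cmp2(2)[OF sb]) (use b in simp)
  have "\<bar>R1 h t\<bar> + \<bar>R2 h t\<bar> \<le> (\<Sum>n. \<bar>fst ((Kp ^^ Suc n) h) t\<bar>) + (\<Sum>n. \<bar>snd ((Kp ^^ Suc n) h) t\<bar>)"
    unfolding R1_def R2_def using summable_rabs[OF s1] summable_rabs[OF s2] by simp
  also have "\<dots> = (\<Sum>n. \<bar>fst ((Kp ^^ Suc n) h) t\<bar> + \<bar>snd ((Kp ^^ Suc n) h) t\<bar>)"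
    using s1 s2 by (rule suminf_add)
  also have "\<dots> \<le> (\<Sum>n. cn n * (L1 h * indicator {0..T} t))"
    by (rule suminf_le[OF b summable_add[OF s1 s2] sb])
  also have "\<dots> = suminf cn * (L1 h * indicator {0..T} t)"
    by (rule suminf_mult2[symmetric, OF summable_cn])
  also have "\<dots> = Cs * L1 h * indicator {0..T} t"
    unfolding Cs_def by (simp add: mult_ac)
  finally show ?thesis .
qed

lemma Int2_meas: "Int2 P \<Longrightarrow> fst P \<in> borel_measurable lborel \<and> snd P \<in> borel_measurable lborel"
  unfolding Int2_def by auto

lemma R_meas:
  assumes h: "Int2 h"
  shows "R1 h \<in> borel_measurable lborel" "R2 h \<in> borel_measurable lborel"
proof -
  have m: "fst ((Kp ^^ Suc n) h) \<in> borel_measurable lborel" "snd ((Kp ^^ Suc n) h) \<in> borel_measurable lborel" for n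
    using Int2_meas[OF Kit_Int2[OF h, of "Suc n"]] by blast+
  show "R1 h \<in> borel_measurable lborel" unfolding R1_def[abs_def] by (rule borel_measurable_suminf) (rule m)
  show "R2 h \<in> borel_measurable lborel" unfolding R2_def[abs_def] by (rule borel_measurable_suminf) (rule m)
qed

lemma Cs_nonneg: "Cs \<ge> 0" unfolding Cs_def using summable_cn cn_nonneg by (simp add: suminf_nonneg)

lemma R_Int2:
  assumes h: "Int2 h"
  shows "integrable lborel (R1 h)" "integrable lborel (R2 h)"
proof -
  have ib: "integrable lborel (\<lambda>t. Cs * L1 h * indicator {0..T} t)"
    by (rule integrable_mult_right[OF int_ind_Icc])
  have nb: "norm (Cs * L1 h * indicator {0..T} t) = Cs * L1 h * indicator {0..T} t" for t
    using Cs_nonneg L1_nonneg[of h] by simp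
  have b1: "norm (R1 h t) \<le> norm (Cs * L1 h * indicator {0..T} t)" for t
  proof -
    have "\<bar>R1 h t\<bar> \<le> Cs * L1 h * indicator {0..T} t"
      using R_bound[OF h, of t] abs_ge_zero[of "R2 h t"] by linarith
    then show ?thesis by (simp only: real_norm_def nb)
  qed
  have b2: "norm (R2 h t) \<le> norm (Cs * L1 h * indicator {0..T} t)" for t
  proof -
    have "\<bar>R2 h t\<bar> \<le> Cs * L1 h * indicator {0..T} t"
      using R_bound[OF h, of t] abs_ge_zero[of "R1 h t"] by linarith
    then show ?thesis by (simp only: real_norm_def nb)
  qed
  show "integrable lborel (R1 h)"
    by (rule Bochner_Integration.integrable_bound[OF ib R_meas(1)[OF h]]) (use b1 in simp)
  show "integrable lborel (R2 h)"
    by (rule Bochner_Integration.integrable_bound[OF ib R_meas(2)[OF h]]) (use b2 in simp)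
qed

lemma Sol_Int2: "Int2 h \<Longrightarrow> Int2 (Sol h)"
  unfolding Sol_def Int2_def using R_Int2 by (auto simp: Int2_def)

lemma Vop_R:
  assumes h: "Int2 h" and k: "kern T M k" and l: "kern T M l"
  shows "Vop k l (R1 h) (R2 h) t = (\<Sum>n. Vop k l (fst ((Kp ^^ Suc n) h)) (snd ((Kp ^^ Suc n) h)) t)"
  unfolding R1_def[abs_def] R2_def[abs_def]
proof (rule Vop_suminf[OF k l])
  show "integrable lborel (fst ((Kp ^^ Suc n) h))" "integrable lborel (snd ((Kp ^^ Suc n) h))" for n
    using Kit_Int2[OF h] unfolding Int2_def by blast+
  show "\<bar>fst ((Kp ^^ Suc n) h) s\<bar> + \<bar>snd ((Kp ^^ Suc n) h) s\<bar> \<le> cn n * L1 h * indicator {0..T} s" for n s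
    using Kit_unif[OF h, of n s] by (simp add: Nrm_def)
  show "cn n * L1 h \<ge> 0" for n using cn_nonneg L1_nonneg by simp
  show "summable (\<lambda>n. cn n * L1 h)" by (intro summable_mult2 summable_cn)
qed

lemma Sol_eq:
  assumes h: "Int2 h"
  shows "fst (Sol h) t = fst h t + fst (Kp (Sol h)) t" "snd (Sol h) t = snd h t + snd (Kp (Sol h)) t"
proof -
  have ih: "integrable lborel (fst h)" "integrable lborel (snd h)" using h by (auto simp: Int2_def)
  note iR = R_Int2[OF h]
  have s1: "summable (\<lambda>n. fst ((Kp ^^ Suc n) h) t)" and s2: "summable (\<lambda>n. snd ((Kp ^^ Suc n) h) t)"
  proof -
    have b: "\<bar>fst ((Kp ^^ Suc n) h) t\<bar> + \<bar>snd ((Kp ^^ Suc n) h) t\<bar> \<le> cn n * (L1 h * indicator {0..T} t)" for n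
      using Kit_unif[OF h, of n t] by (simp add: Nrm_def mult_ac)
    have sb: "summable (\<lambda>n. cn n * (L1 h * indicator {0..T} t))" by (intro summable_mult2 summable_cn)
    show "summable (\<lambda>n. fst ((Kp ^^ Suc n) h) t)" "summable (\<lambda>n. snd ((Kp ^^ Suc n) h) t)"
      using summable_cmp2[OF sb b] by auto
  qed
  have "fst (Kp (Sol h)) t = Vop k11 k12 (fst h) (snd h) t + Vop k11 k12 (R1 h) (R2 h) t"
    unfolding Kp_def Sol_def using Vop_add[OF k11 k12 ih iR] by simp
  also have "\<dots> = fst (Kp h) t + (\<Sum>n. fst ((Kp ^^ Suc (Suc n)) h) t)"
    unfolding Vop_R[OF h k11 k12] by (simp add: Kp_def)
  also have "\<dots> = R1 h t"
    unfolding R1_def using suminf_split_head[OF s1] by simp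
  finally show "fst (Sol h) t = fst h t + fst (Kp (Sol h)) t" unfolding Sol_def by simp
  have "snd (Kp (Sol h)) t = Vop k21 k22 (fst h) (snd h) t + Vop k21 k22 (R1 h) (R2 h) t"
    unfolding Kp_def Sol_def using Vop_add[OF k21 k22 ih iR] by simp
  also have "\<dots> = snd (Kp h) t + (\<Sum>n. snd ((Kp ^^ Suc (Suc n)) h) t)"
    unfolding Vop_R[OF h k21 k22] by (simp add: Kp_def)
  also have "\<dots> = R2 h t"
    unfolding R2_def using suminf_split_head[OF s2] by simp
  finally show "snd (Sol h) t = snd h t + snd (Kp (Sol h)) t" unfolding Sol_def by simp
qed

lemma uniq:
  assumes D: "Int2 D" and ae: "AE t in lborel. fst D t = fst (Kp D) t \<and> snd D t = snd (Kp D) t"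
  shows "AE t in lborel. fst D t = 0 \<and> snd D t = 0"
proof -
  define E where "E = Kp D"
  have E: "Int2 E" unfolding E_def using Kp_Int2[OF D] .
  have mD: "fst D \<in> borel_measurable lborel" "snd D \<in> borel_measurable lborel" using Int2_meas[OF D] by auto
  have mE: "fst E \<in> borel_measurable lborel" "snd E \<in> borel_measurable lborel" using Int2_meas[OF E] by auto
  have ae1: "AE t in lborel. fst D t = fst E t" and ae2: "AE t in lborel. snd D t = snd E t"
    using ae unfolding E_def by auto
  have ae1': "AE t in lborel. fst E t = fst D t" using ae1 by eventually_elim simp
  have ae2': "AE t in lborel. snd E t = snd D t" using ae2 by eventually_elim simp
  have "Kp E = Kp D"
    unfolding Kp_def using Vop_cong_AE[OF k11 k12 mE mD ae1' ae2'] Vop_cong_AE[OF k21 k22 mE mD ae1' ae2']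
    by (simp add: fun_eq_iff)
  then have "Kp E = E" unfolding E_def by simp
  then have it: "(Kp ^^ n) E = E" for n by (induction n) auto
  have z: "Nrm E t = 0" for t
  proof -
    have le: "Nrm E t \<le> cn n * L1 E * indicator {0..T} t" for n
      using Kit_unif[OF E, of n t] it[of "Suc n"] by simp
    have "(\<lambda>n. cn n * L1 E * indicator {0..T} t) \<longlonglongrightarrow> 0 * L1 E * indicator {0..T} t"
      by (intro tendsto_mult_right summable_LIMSEQ_zero summable_cn)
    then have "Nrm E t \<le> 0" using le by (simp add: LIMSEQ_le_const)
    moreover have "Nrm E t \<ge> 0" by (simp add: Nrm_def)
    ultimately show ?thesis by simp
  qed
  have all: "fst E t = 0 \<and> snd E t = 0" for t using z[of t] by (simp add: Nrm_def add_nonneg_eq_0_iff)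
  show ?thesis using ae1 ae2 by eventually_elim (simp add: all)
qed

lemma sol_unique:
  assumes P: "Int2 P" and h: "Int2 h"
    and ae: "AE t in lborel. fst P t = fst h t + fst (Kp P) t \<and> snd P t = snd h t + snd (Kp P) t"
  shows "AE t in lborel. fst P t = fst (Sol h) t \<and> snd P t = snd (Sol h) t"
proof -
  define D where "D = (\<lambda>t. fst P t - fst (Sol h) t, \<lambda>t. snd P t - snd (Sol h) t)"
  have S: "Int2 (Sol h)" using Sol_Int2[OF h] .
  have iP: "integrable lborel (fst P)" "integrable lborel (snd P)" using P by (auto simp: Int2_def)
  have iS: "integrable lborel (fst (Sol h))" "integrable lborel (snd (Sol h))" using S by (auto simp: Int2_def)
  have D: "Int2 D" unfolding D_def Int2_def using iP iS by auto
  have KD: "fst (Kp D) t = fst (Kp P) t - fst (Kp (Sol h)) t" "snd (Kp D) t = snd (Kp P) t - snd (Kp (Sol h)) t" for t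
    unfolding D_def Kp_def using Vop_diff[OF k11 k12 iP iS] Vop_diff[OF k21 k22 iP iS] by simp_all
  have eqD: "fst D t = fst P t - fst (Sol h) t" "snd D t = snd P t - snd (Sol h) t" for t
    by (simp_all add: D_def)
  have "AE t in lborel. fst D t = fst (Kp D) t \<and> snd D t = snd (Kp D) t"
    using ae by eventually_elim (simp add: KD eqD Sol_eq[OF h])
  from uniq[OF D this] show ?thesis by eventually_elim (simp add: D_def)
qed

end



definition trim :: "real \<Rightarrow> (real \<Rightarrow> real) \<Rightarrow> real \<Rightarrow> real" where
  "trim T f = (\<lambda>s. indicator {0<..<T} s * f s)"

lemma int_ind_Ioo: "integrable lborel (indicator {a<..<b::real} :: real \<Rightarrow> real)"
proof (cases "a \<le> b")
  case True then show ?thesis by (intro integrable_real_indicator) (simp_all add: emeasure_lborel_Ioo)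
next
  case False then have "{a<..<b} = {}" by auto
  then show ?thesis by simp
qed

lemma abs_le_sq1: "\<bar>y::real\<bar> \<le> 1 + y\<^sup>2"
proof (cases "\<bar>y\<bar> \<le> 1")
  case True then show ?thesis using zero_le_power2[of y] by linarith
next
  case False
  then have "\<bar>y\<bar> * 1 \<le> \<bar>y\<bar> * \<bar>y\<bar>" by (intro mult_left_mono) auto
  moreover have "y\<^sup>2 = \<bar>y\<bar> * \<bar>y\<bar>" by (simp add: power2_eq_square abs_mult[symmetric])
  ultimately show ?thesis by linarith
qed

lemma integral_pt:
  fixes f g :: "real \<Rightarrow> real"
  assumes g: "integrable lborel g" and fg: "\<And>x. x \<noteq> a \<Longrightarrow> f x = g x"
  shows "integral\<^sup>L lborel f = integral\<^sup>L lborel g"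
proof -
  have f: "f = (\<lambda>x. g x + indicator {a} x * (f a - g a))"
    by (auto simp: fun_eq_iff indicator_def fg)
  have i: "integrable lborel (\<lambda>x. indicator {a} x * (f a - g a))"
    by (intro integrable_mult_left integrable_real_indicator) auto
  have "integral\<^sup>L lborel f = integral\<^sup>L lborel g + (\<integral>x. indicator {a} x * (f a - g a) \<partial>lborel)"
    by (subst f) (rule Bochner_Integration.integral_add[OF g i])
  also have "(\<integral>x. indicator {a} x * (f a - g a) \<partial>lborel) = 0"
    by (simp add: integral_mult_left_zero)
  finally show ?thesis by simp
qed

lemma sq_int_trim:
  assumes "sq_int {0<..<T} f"
  shows "trim T f \<in> borel_measurable lborel" "integrable lborel (\<lambda>x. (trim T f x)\<^sup>2)"
    "integrable lborel (trim T f)"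
proof -
  show m: "trim T f \<in> borel_measurable lborel"
    using assms unfolding sq_int_def set_borel_measurable_def trim_def by simp
  have sq: "(trim T f x)\<^sup>2 = indicator {0<..<T} x * (f x)\<^sup>2" for x
    by (simp add: trim_def indicator_def power2_eq_square)
  show i2: "integrable lborel (\<lambda>x. (trim T f x)\<^sup>2)"
    using assms unfolding sq_int_def set_integrable_def sq by simp
  show "integrable lborel (trim T f)"
  proof (rule Bochner_Integration.integrable_bound[OF _ m])
    show "integrable lborel (\<lambda>x. indicator {0<..<T} x + (trim T f x)\<^sup>2)"
      using i2 int_ind_Ioo by simp
    show "AE x in lborel. norm (trim T f x) \<le> norm (indicator {0<..<T} x + (trim T f x)\<^sup>2)"
    proof (rule AE_I2)
      fix x
      note a = abs_le_sq1
      show "norm (trim T f x) \<le> norm (indicator {0<..<T} x + (trim T f x)\<^sup>2)"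
        using a[of "f x"] by (auto simp: trim_def indicator_def)
    qed
  qed
qed

lemma transfer:
  fixes v1 v2 f1 f2 :: "real \<Rightarrow> real"
  assumes t: "0 < t" "t < T"
    and k1: "\<And>s. k1 t s = indicator {0..t} s * v1 (T - s)"
    and k2: "\<And>s. k2 t s = indicator {0..t} s * v2 (T - s)"
    and i: "integrable lborel (\<lambda>s. k1 t s * trim T f1 s + k2 t s * trim T f2 s)"
  shows "(LINT s:{T-t..T}|lborel. v1 s * f1 (T - s) + v2 s * f2 (T - s)) = Vop k1 k2 (trim T f1) (trim T f2) t"
proof -
  have "(LINT s:{T-t..T}|lborel. v1 s * f1 (T - s) + v2 s * f2 (T - s)) =
      (\<integral>s. indicator {T-t..T} s * (v1 s * f1 (T - s) + v2 s * f2 (T - s)) \<partial>lborel)"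
    unfolding set_lebesgue_integral_def by simp
  also have "\<dots> = (\<integral>s. indicator {T-t..T} (T - s) * (v1 (T - s) * f1 s + v2 (T - s) * f2 s) \<partial>lborel)"
    using lborel_integral_real_affine[of "-1" "\<lambda>s. indicator {T-t..T} s * (v1 s * f1 (T - s) + v2 s * f2 (T - s))" T]
    by simp
  also have "\<dots> = Vop k1 k2 (trim T f1) (trim T f2) t"
    unfolding Vop_def
  proof (rule integral_pt[OF i, of 0])
    fix s :: real assume "s \<noteq> 0"
    then show "indicator {T-t..T} (T - s) * (v1 (T - s) * f1 s + v2 (T - s) * f2 s) =
       k1 t s * trim T f1 s + k2 t s * trim T f2 s"
      using t by (auto simp: k1 k2 trim_def indicator_def)
  qed
  finally show ?thesis .
qed

lemma cv1:
  fixes \<phi> :: "real \<Rightarrow> real"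
  shows "(\<integral>x. indicator {0<..<T} x * \<phi> (T - x) \<partial>lborel) = (\<integral>x. indicator {0<..<T} x * (\<phi> x :: real) \<partial>lborel)"
  using lborel_integral_real_affine[of "-1" "\<lambda>x. indicator {0<..<T} x * \<phi> (T - x)" T]
  by (simp add: indicator_def conj_commute)

lemma cv2:
  fixes \<phi> :: "real \<Rightarrow> real"
  shows "(\<integral>x. indicator {-T<..<0} x * \<phi> (T + x) \<partial>lborel) = (\<integral>x. indicator {0<..<T} x * (\<phi> x :: real) \<partial>lborel)"
  using lborel_integral_real_affine[of "1" "\<lambda>x. indicator {-T<..<0} x * \<phi> (T + x)" "-T"]
  by (simp add: indicator_def conj_commute)

lemma cv1i:
  fixes \<phi> :: "real \<Rightarrow> real"
  shows "integrable lborel (\<lambda>x. indicator {0<..<T} x * \<phi> (T - x)) \<longleftrightarrow> integrable lborel (\<lambda>x. indicator {0<..<T} x * (\<phi> x :: real))"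
  using lborel_integrable_real_affine_iff[of "-1" "\<lambda>x. indicator {0<..<T} x * \<phi> (T - x)" T]
  by (simp add: indicator_def conj_commute)

lemma cv2i:
  fixes \<phi> :: "real \<Rightarrow> real"
  shows "integrable lborel (\<lambda>x. indicator {-T<..<0} x * \<phi> (T + x)) \<longleftrightarrow> integrable lborel (\<lambda>x. indicator {0<..<T} x * (\<phi> x :: real))"
  using lborel_integrable_real_affine_iff[of "1" "\<lambda>x. indicator {-T<..<0} x * \<phi> (T + x)" "-T"]
  by (simp add: indicator_def conj_commute)

lemma cs_lite:
  fixes u :: "real \<Rightarrow> real"
  assumes T: "T > 0" and m: "u \<in> borel_measurable lborel" and i2: "integrable lborel (\<lambda>x. (u x)\<^sup>2)"
    and supp: "\<And>x. x \<notin> {0<..<T} \<Longrightarrow> u x = 0"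
  shows "(\<integral>x. \<bar>u x\<bar> \<partial>lborel)\<^sup>2 \<le> T * (\<integral>x. (u x)\<^sup>2 \<partial>lborel)"
proof -
  note a = abs_le_sq1
  have i1: "integrable lborel (\<lambda>x. \<bar>u x\<bar>)"
  proof (rule Bochner_Integration.integrable_bound[of _ "\<lambda>x. indicator {0<..<T} x + (u x)\<^sup>2"])
    show "integrable lborel (\<lambda>x. indicator {0<..<T} x + (u x)\<^sup>2)" using i2 int_ind_Ioo by simp
    show "(\<lambda>x. \<bar>u x\<bar>) \<in> borel_measurable lborel" using m by measurable
    show "AE x in lborel. norm \<bar>u x\<bar> \<le> norm (indicator {0<..<T} x + (u x)\<^sup>2)"
      using a supp by (intro AE_I2) (auto simp: indicator_def)
  qed
  define A where "A = (\<integral>x. \<bar>u x\<bar> \<partial>lborel)"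
  define B where "B = (\<integral>x. (u x)\<^sup>2 \<partial>lborel)"
  define c where "c = A / T"
  have mm: "measure lborel {0<..<T} = T" using measure_lborel_Ioo[of 0 T] T by (metis diff_zero less_imp_le)
  have mT: "(\<integral>x. indicator {0<..<T} x \<partial>lborel) = T"
  proof -
    show ?thesis using mm by (simp only: Bochner_Integration.integral_indicator space_lborel space_borel Int_UNIV_right)
  qed
  have "0 \<le> (\<integral>x. indicator {0<..<T} x * (\<bar>u x\<bar> - c)\<^sup>2 \<partial>lborel)"
    by (rule integral_nonneg_AE) auto
  also have "(\<integral>x. indicator {0<..<T} x * (\<bar>u x\<bar> - c)\<^sup>2 \<partial>lborel) =
      (\<integral>x. (u x)\<^sup>2 - 2 * c * \<bar>u x\<bar> + c\<^sup>2 * indicator {0<..<T} x \<partial>lborel)"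
    by (rule Bochner_Integration.integral_cong)
       (auto simp: indicator_def power2_eq_square supp algebra_simps)
  also have "\<dots> = B - 2 * c * A + c\<^sup>2 * T"
    using i1 i2 int_ind_Ioo[of 0 T] unfolding A_def B_def by (simp add: mT mm)
  finally have "0 \<le> B - 2 * c * A + c\<^sup>2 * T" .
  then have "0 \<le> T * B - A\<^sup>2" using T unfolding c_def
    by (simp add: field_simps power2_eq_square)
  then show ?thesis unfolding A_def B_def by simp
qed




definition tri :: "real \<Rightarrow> (real \<times> real) set" where
  "tri T = {z. 0 \<le> snd z \<and> snd z \<le> fst z \<and> fst z \<le> T}"

lemma closed_tri: "closed (tri T)"
  unfolding tri_def by (intro closed_Collect_conj closed_Collect_le continuous_intros)

lemma compact_tri: "compact (tri T)"
proof -
  have "tri T = ({0..T} \<times> {0..T}) \<inter> tri T" by (auto simp: tri_def)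
  moreover have "compact (({0..T} \<times> {0..T}) \<inter> tri T)"
    by (intro compact_Int_closed compact_Times compact_Icc closed_tri)
  ultimately show ?thesis by simp
qed

lemma tri_kern:
  assumes "continuous_on (tri T) f"
  shows "\<exists>B. kern T B (\<lambda>t s. indicator (tri T) (t, s) * f (t, s))"
proof -
  have "compact (f ` tri T)" by (rule compact_continuous_image[OF assms compact_tri])
  then have "bounded (f ` tri T)" by (rule compact_imp_bounded)
  then obtain B where B: "B > 0" "\<And>z. z \<in> tri T \<Longrightarrow> norm (f z) \<le> B"
    unfolding bounded_pos by auto
  have m: "(\<lambda>z. indicator (tri T) z *\<^sub>R f z) \<in> borel_measurable borel"
    by (rule borel_measurable_continuous_on_indicator[OF _ assms]) (simp add: closed_tri borel_closed)
  have "kern T B (\<lambda>t s. indicator (tri T) (t, s) * f (t, s))"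
    unfolding kern_def
  proof (intro conjI allI impI)
    show "(\<lambda>z. indicator (tri T) (fst z, snd z) * f (fst z, snd z)) \<in> borel_measurable borel"
      using m by simp
    show "\<bar>indicator (tri T) (t, s) * f (t, s)\<bar> \<le> B" for t s
      using B by (cases "(t, s) \<in> tri T") (auto simp: indicator_def)
    fix t s assume "indicator (tri T) (t, s) * f (t, s) \<noteq> (0::real)"
    then have "(t, s) \<in> tri T" by (auto simp: indicator_def split: if_splits)
    then show "0 \<le> s" "s \<le> t" "t \<le> T" by (auto simp: tri_def)
  qed
  then show ?thesis ..
qed

lemma kern_mono:
  assumes "kern T B k" "B \<le> B'" shows "kern T B' k"
proof -
  have b: "\<bar>k t s\<bar> \<le> B'" for t s using kern_abs[OF assms(1), of t s] assms(2) by linarith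
  show ?thesis using assms(1) b unfolding kern_def by blast
qed

lemma kern_add: "kern T B1 k \<Longrightarrow> kern T B2 l \<Longrightarrow> kern T (B1 + B2) (\<lambda>t s. k t s + l t s)"
  unfolding kern_def
proof (elim conjE, intro conjI allI impI)
  assume a: "(\<lambda>z. k (fst z) (snd z)) \<in> borel_measurable borel" "(\<lambda>z. l (fst z) (snd z)) \<in> borel_measurable borel"
  show "(\<lambda>z. k (fst z) (snd z) + l (fst z) (snd z)) \<in> borel_measurable borel"
    using borel_measurable_add[OF a] .
next
  fix t s assume "\<forall>t s. \<bar>k t s\<bar> \<le> B1" "\<forall>t s. \<bar>l t s\<bar> \<le> B2"
  then have "\<bar>k t s\<bar> \<le> B1" "\<bar>l t s\<bar> \<le> B2" by auto
  moreover have "\<bar>k t s + l t s\<bar> \<le> \<bar>k t s\<bar> + \<bar>l t s\<bar>" by (rule abs_triangle_ineq)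
  ultimately show "\<bar>k t s + l t s\<bar> \<le> B1 + B2" by linarith
next
  fix t s assume z: "\<forall>t s. k t s \<noteq> 0 \<longrightarrow> 0 \<le> s \<and> s \<le> t \<and> t \<le> T" "\<forall>t s. l t s \<noteq> 0 \<longrightarrow> 0 \<le> s \<and> s \<le> t \<and> t \<le> T"
    and "k t s + l t s \<noteq> 0"
  then have "k t s \<noteq> 0 \<or> l t s \<noteq> 0" by auto
  then show "0 \<le> s" "s \<le> t" "t \<le> T" using z by auto
qed

lemma kern_uminus: "kern T B k \<Longrightarrow> kern T B (\<lambda>t s. - k t s)"
  unfolding kern_def
proof (elim conjE, intro conjI allI impI)
  assume a: "(\<lambda>z. k (fst z) (snd z)) \<in> borel_measurable borel"
  show "(\<lambda>z. - k (fst z) (snd z)) \<in> borel_measurable borel" using borel_measurable_uminus[OF a] .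
qed auto

lemma kern_diff: "kern T B1 k \<Longrightarrow> kern T B2 l \<Longrightarrow> kern T (B1 + B2) (\<lambda>t s. k t s - l t s)"
  using kern_add[OF _ kern_uminus, of T B1 k B2 l] by simp

lemma Vop_kadd:
  assumes "kern T B1 k" "kern T B2 k'" "kern T B3 l" "kern T B4 l'" "integrable lborel p" "integrable lborel q"
  shows "Vop (\<lambda>t s. k t s + k' t s) (\<lambda>t s. l t s + l' t s) p q t = Vop k l p q t + Vop k' l' p q t"
proof -
  have i: "integrable lborel (\<lambda>s. k t s * p s)" "integrable lborel (\<lambda>s. k' t s * p s)"
    "integrable lborel (\<lambda>s. l t s * q s)" "integrable lborel (\<lambda>s. l' t s * q s)"
    using kern_int assms by blast+
  have "Vop (\<lambda>t s. k t s + k' t s) (\<lambda>t s. l t s + l' t s) p q t =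
    (\<integral>s. (k t s * p s + l t s * q s) + (k' t s * p s + l' t s * q s) \<partial>lborel)"
    unfolding Vop_def by (rule Bochner_Integration.integral_cong) (simp_all add: algebra_simps)
  also have "\<dots> = Vop k l p q t + Vop k' l' p q t"
    unfolding Vop_def using i by (intro Bochner_Integration.integral_add) auto
  finally show ?thesis .
qed

lemma Vop_kdiff:
  assumes "kern T B1 k" "kern T B2 k'" "kern T B3 l" "kern T B4 l'" "integrable lborel p" "integrable lborel q"
  shows "Vop (\<lambda>t s. k t s - k' t s) (\<lambda>t s. l t s - l' t s) p q t = Vop k l p q t - Vop k' l' p q t"
proof -
  have i: "integrable lborel (\<lambda>s. k t s * p s)" "integrable lborel (\<lambda>s. k' t s * p s)"
    "integrable lborel (\<lambda>s. l t s * q s)" "integrable lborel (\<lambda>s. l' t s * q s)"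
    using kern_int assms by blast+
  have "Vop (\<lambda>t s. k t s - k' t s) (\<lambda>t s. l t s - l' t s) p q t =
    (\<integral>s. (k t s * p s + l t s * q s) - (k' t s * p s + l' t s * q s) \<partial>lborel)"
    unfolding Vop_def by (rule Bochner_Integration.integral_cong) (simp_all add: algebra_simps)
  also have "\<dots> = Vop k l p q t - Vop k' l' p q t"
    unfolding Vop_def using i by (intro Bochner_Integration.integral_diff) auto
  finally show ?thesis .
qed




locale mainloc =
  fixes w1p w2p w1m w2m :: "real \<Rightarrow> real \<Rightarrow> real" and T :: real
  assumes cp1: "continuous_on {(x, t). 0 \<le> x \<and> x \<le> t} (\<lambda>(x, t). w1p x t)"
      and cp2: "continuous_on {(x, t). 0 \<le> x \<and> x \<le> t} (\<lambda>(x, t). w2p x t)"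
      and cm1: "continuous_on {(x, t). -t \<le> x \<and> x \<le> 0} (\<lambda>(x, t). w1m x t)"
      and cm2: "continuous_on {(x, t). -t \<le> x \<and> x \<le> 0} (\<lambda>(x, t). w2m x t)"
      and Tpos: "T > 0"
begin

definition "a1 = (\<lambda>t s. indicator (tri T) (t, s) * w1p (T - t) (T - s))"
definition "a2 = (\<lambda>t s. indicator (tri T) (t, s) * w2p (T - t) (T - s))"
definition "b1 = (\<lambda>t s. indicator (tri T) (t, s) * w1m (t - T) (T - s))"
definition "b2 = (\<lambda>t s. indicator (tri T) (t, s) * w2m (t - T) (T - s))"

lemma contp:
  assumes "continuous_on {(x, t). 0 \<le> x \<and> x \<le> t} (\<lambda>(x, t). w x t)"
  shows "\<exists>B. kern T B (\<lambda>t s. indicator (tri T) (t, s) * w (T - t) (T - s))"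
proof -
  have "continuous_on (tri T) (\<lambda>z. (\<lambda>(x, t). w x t) (T - fst z, T - snd z))"
    by (rule continuous_on_compose2[OF assms]) (auto simp: tri_def intro!: continuous_intros)
  then have "continuous_on (tri T) (\<lambda>z. w (T - fst z) (T - snd z))" by simp
  from tri_kern[OF this] show ?thesis by simp
qed

lemma contm:
  assumes "continuous_on {(x, t). -t \<le> x \<and> x \<le> 0} (\<lambda>(x, t). w x t)"
  shows "\<exists>B. kern T B (\<lambda>t s. indicator (tri T) (t, s) * w (t - T) (T - s))"
proof -
  have "continuous_on (tri T) (\<lambda>z. (\<lambda>(x, t). w x t) (fst z - T, T - snd z))"
    by (rule continuous_on_compose2[OF assms]) (auto simp: tri_def intro!: continuous_intros)
  then have "continuous_on (tri T) (\<lambda>z. w (fst z - T) (T - snd z))" by simp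
  from tri_kern[OF this] show ?thesis by simp
qed

definition "Ba1 = (SOME B. kern T B a1)"
definition "Ba2 = (SOME B. kern T B a2)"
definition "Bb1 = (SOME B. kern T B b1)"
definition "Bb2 = (SOME B. kern T B b2)"

lemma ka1: "kern T Ba1 a1" unfolding Ba1_def a1_def by (rule someI_ex[OF contp[OF cp1]])
lemma ka2: "kern T Ba2 a2" unfolding Ba2_def a2_def by (rule someI_ex[OF contp[OF cp2]])
lemma kb1: "kern T Bb1 b1" unfolding Bb1_def b1_def by (rule someI_ex[OF contm[OF cm1]])
lemma kb2: "kern T Bb2 b2" unfolding Bb2_def b2_def by (rule someI_ex[OF contm[OF cm2]])

definition "Mk = Ba1 + Ba2 + Bb1 + Bb2"
definition "k11 = (\<lambda>t s. b1 t s - a1 t s)"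
definition "k12 = (\<lambda>t s. b2 t s - a2 t s)"
definition "k21 = (\<lambda>t s. a1 t s + b1 t s)"
definition "k22 = (\<lambda>t s. a2 t s + b2 t s)"

lemma volt_inst: "volt T Mk k11 k12 k21 k22"
proof -
  have n: "Ba1 \<ge> 0" "Ba2 \<ge> 0" "Bb1 \<ge> 0" "Bb2 \<ge> 0"
    using kern_M[OF ka1] kern_M[OF ka2] kern_M[OF kb1] kern_M[OF kb2] by auto
  show ?thesis
  proof
    show "T > 0" by (rule Tpos)
    show "kern T Mk k11" unfolding k11_def by (rule kern_mono[OF kern_diff[OF kb1 ka1]]) (use n in \<open>simp add: Mk_def\<close>)
    show "kern T Mk k12" unfolding k12_def by (rule kern_mono[OF kern_diff[OF kb2 ka2]]) (use n in \<open>simp add: Mk_def\<close>)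
    show "kern T Mk k21" unfolding k21_def by (rule kern_mono[OF kern_add[OF ka1 kb1]]) (use n in \<open>simp add: Mk_def\<close>)
    show "kern T Mk k22" unfolding k22_def by (rule kern_mono[OF kern_add[OF ka2 kb2]]) (use n in \<open>simp add: Mk_def\<close>)
  qed
qed

sublocale V: volt T Mk k11 k12 k21 k22 by (rule volt_inst)

lemma rep_pos:
  assumes i: "integrable lborel (trim T f1)" "integrable lborel (trim T f2)" and x: "0 < x" "x < T"
  shows "uF w1p w2p w1m w2m T (f1, f2) x = (1/2) * f1 (T - x) - (1/2) * f2 (T - x) + Vop a1 a2 (trim T f1) (trim T f2) (T - x)"
proof -
  have tr: "(LINT s:{T - (T - x)..T}|lborel. w1p x s * f1 (T - s) + w2p x s * f2 (T - s)) = Vop a1 a2 (trim T f1) (trim T f2) (T - x)"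
  proof (rule transfer)
    show "0 < T - x" "T - x < T" using x by auto
    show "a1 (T - x) s = indicator {0..T - x} s * w1p x (T - s)" for s
      using x by (simp add: a1_def tri_def indicator_def)
    show "a2 (T - x) s = indicator {0..T - x} s * w2p x (T - s)" for s
      using x by (simp add: a2_def tri_def indicator_def)
    show "integrable lborel (\<lambda>s. a1 (T - x) s * trim T f1 s + a2 (T - x) s * trim T f2 s)"
      using kern_int[OF ka1 i(1)] kern_int[OF ka2 i(2)] by simp
  qed
  show ?thesis unfolding uF_def using x tr by simp
qed

lemma rep_neg:
  assumes i: "integrable lborel (trim T f1)" "integrable lborel (trim T f2)" and x: "-T < x" "x < 0"
  shows "uF w1p w2p w1m w2m T (f1, f2) x = -(1/2) * f1 (T + x) - (1/2) * f2 (T + x) + Vop b1 b2 (trim T f1) (trim T f2) (T + x)"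
proof -
  have tr: "(LINT s:{T - (T + x)..T}|lborel. w1m x s * f1 (T - s) + w2m x s * f2 (T - s)) = Vop b1 b2 (trim T f1) (trim T f2) (T + x)"
  proof (rule transfer)
    show "0 < T + x" "T + x < T" using x by auto
    show "b1 (T + x) s = indicator {0..T + x} s * w1m x (T - s)" for s
      using x by (simp add: b1_def tri_def indicator_def)
    show "b2 (T + x) s = indicator {0..T + x} s * w2m x (T - s)" for s
      using x by (simp add: b2_def tri_def indicator_def)
    show "integrable lborel (\<lambda>s. b1 (T + x) s * trim T f1 s + b2 (T + x) s * trim T f2 s)"
      using kern_int[OF kb1 i(1)] kern_int[OF kb2 i(2)] by simp
  qed
  show ?thesis unfolding uF_def using x tr by simp
qed

end



lemma sq_ineq1: "((1/2) * u - (1/2) * v + w)\<^sup>2 \<le> u\<^sup>2 + v\<^sup>2 + 2 * w\<^sup>2" for u v w :: real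
proof -
  have "u\<^sup>2 + v\<^sup>2 + 2 * w\<^sup>2 - ((1/2) * u - (1/2) * v + w)\<^sup>2 = ((1/2) * u - (1/2) * v - w)\<^sup>2 + 2 * ((1/2) * u + (1/2) * v)\<^sup>2"
    by (simp add: power2_eq_square algebra_simps)
  moreover have "0 \<le> ((1/2) * u - (1/2) * v - w)\<^sup>2 + 2 * ((1/2) * u + (1/2) * v)\<^sup>2" by simp
  ultimately show ?thesis by linarith
qed

lemma sq_ineq2: "(-(1/2) * u - (1/2) * v + w)\<^sup>2 \<le> u\<^sup>2 + v\<^sup>2 + 2 * w\<^sup>2" for u v w :: real
  using sq_ineq1[of "-u" v w] by simp

lemma sq_mono_abs: "\<bar>w\<bar> \<le> c \<Longrightarrow> w\<^sup>2 \<le> (c::real)\<^sup>2"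
  by (metis abs_ge_zero abs_le_square_iff abs_of_nonneg order_trans)

lemma ctrl_trim:
  assumes "F \<in> ctrl_space T"
  shows "trim T (fst F) \<in> borel_measurable lborel" "integrable lborel (\<lambda>x. (trim T (fst F) x)\<^sup>2)"
    "integrable lborel (trim T (fst F))"
    "trim T (snd F) \<in> borel_measurable lborel" "integrable lborel (\<lambda>x. (trim T (snd F) x)\<^sup>2)"
    "integrable lborel (trim T (snd F))"
  using sq_int_trim[of T "fst F"] sq_int_trim[of T "snd F"] assms unfolding ctrl_space_def by auto

lemma ctrl_norm_trim:
  "ctrl_norm T F = sqrt (\<integral>x. (trim T (fst F) x)\<^sup>2 + (trim T (snd F) x)\<^sup>2 \<partial>lborel)"
  unfolding ctrl_norm_def set_lebesgue_integral_def
  by (rule arg_cong[where f=sqrt], rule Bochner_Integration.integral_cong)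
     (auto simp: trim_def indicator_def power2_eq_square)

lemma l2_norm_ind: "l2_norm S g = sqrt (\<integral>x. indicator S x * (g x)\<^sup>2 \<partial>lborel)"
  unfolding l2_norm_def set_lebesgue_integral_def by simp

lemma trim_sq_ind: "indicator {0<..<T} x * (trim T f x)\<^sup>2 = (trim T f x)\<^sup>2"
  by (simp add: trim_def indicator_def)

lemma L1_sq:
  assumes T: "T > 0" and m: "p \<in> borel_measurable lborel" "q \<in> borel_measurable lborel"
    and i: "integrable lborel (\<lambda>x. (p x)\<^sup>2)" "integrable lborel (\<lambda>x. (q x)\<^sup>2)"
    and s: "\<And>x. x \<notin> {0<..<T} \<Longrightarrow> p x = 0" "\<And>x. x \<notin> {0<..<T} \<Longrightarrow> q x = 0"
  shows "(L1 (p, q))\<^sup>2 \<le> 2 * T * (\<integral>x. (p x)\<^sup>2 + (q x)\<^sup>2 \<partial>lborel)"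
proof -
  let ?u = "\<lambda>x. \<bar>p x\<bar> + \<bar>q x\<bar>"
  have mu: "?u \<in> borel_measurable lborel" using m by measurable
  have b: "(?u x)\<^sup>2 \<le> 2 * ((p x)\<^sup>2 + (q x)\<^sup>2)" for x
  proof -
    have "2 * ((p x)\<^sup>2 + (q x)\<^sup>2) - (?u x)\<^sup>2 = (\<bar>p x\<bar> - \<bar>q x\<bar>)\<^sup>2"
      by (simp add: power2_eq_square algebra_simps)
    then show ?thesis by (metis diff_ge_0_iff_ge zero_le_power2)
  qed
  have i2: "integrable lborel (\<lambda>x. 2 * ((p x)\<^sup>2 + (q x)\<^sup>2))" using i by auto
  have iu: "integrable lborel (\<lambda>x. (?u x)\<^sup>2)"
    by (rule Bochner_Integration.integrable_bound[OF i2]) (use mu b in auto)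
  have "(\<integral>x. \<bar>?u x\<bar> \<partial>lborel)\<^sup>2 \<le> T * (\<integral>x. (?u x)\<^sup>2 \<partial>lborel)"
    by (rule cs_lite[OF T mu iu]) (use s in auto)
  also have "(\<integral>x. (?u x)\<^sup>2 \<partial>lborel) \<le> (\<integral>x. 2 * ((p x)\<^sup>2 + (q x)\<^sup>2) \<partial>lborel)"
    by (rule integral_mono[OF iu i2 b])
  finally have "(\<integral>x. \<bar>?u x\<bar> \<partial>lborel)\<^sup>2 \<le> T * (\<integral>x. 2 * ((p x)\<^sup>2 + (q x)\<^sup>2) \<partial>lborel)"
    using T by (simp add: mult_left_mono)
  moreover have "(\<integral>x. \<bar>?u x\<bar> \<partial>lborel) = L1 (p, q)" by (simp add: L1_def Nrm_def)
  moreover have "(\<integral>x. 2 * ((p x)\<^sup>2 + (q x)\<^sup>2) \<partial>lborel) = 2 * (\<integral>x. (p x)\<^sup>2 + (q x)\<^sup>2 \<partial>lborel)"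
    by (rule integral_mult_right_zero)
  ultimately show ?thesis by simp
qed

lemma trim_supp: "x \<notin> {0<..<T} \<Longrightarrow> trim T f x = 0"
  by (simp add: trim_def)

context mainloc begin

lemma kMk: "kern T Mk a1" "kern T Mk a2" "kern T Mk b1" "kern T Mk b2"
proof -
  have n: "Ba1 \<ge> 0" "Ba2 \<ge> 0" "Bb1 \<ge> 0" "Bb2 \<ge> 0"
    using kern_M[OF ka1] kern_M[OF ka2] kern_M[OF kb1] kern_M[OF kb2] by auto
  show "kern T Mk a1" by (rule kern_mono[OF ka1]) (use n in \<open>simp add: Mk_def\<close>)
  show "kern T Mk a2" by (rule kern_mono[OF ka2]) (use n in \<open>simp add: Mk_def\<close>)
  show "kern T Mk b1" by (rule kern_mono[OF kb1]) (use n in \<open>simp add: Mk_def\<close>)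
  show "kern T Mk b2" by (rule kern_mono[OF kb2]) (use n in \<open>simp add: Mk_def\<close>)
qed

lemma Geq:
  assumes i: "integrable lborel (trim T f1)" "integrable lborel (trim T f2)"
  shows "indicator {-T<..<T} x * uF w1p w2p w1m w2m T (f1, f2) x =
    indicator {0<..<T} x * ((1/2) * trim T f1 (T - x) - (1/2) * trim T f2 (T - x) + Vop a1 a2 (trim T f1) (trim T f2) (T - x))
  + indicator {-T<..<0} x * (-(1/2) * trim T f1 (T + x) - (1/2) * trim T f2 (T + x) + Vop b1 b2 (trim T f1) (trim T f2) (T + x))"
proof (cases "0 < x \<and> x < T")
  case True
  then show ?thesis using rep_pos[OF i, of x] by (simp add: trim_def indicator_def)
next
  case False
  show ?thesis
  proof (cases "-T < x \<and> x < 0")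
    case True
    then show ?thesis using rep_neg[OF i, of x] by (simp add: trim_def indicator_def)
  next
    case False2: False
    have z1: "indicator {0<..<T} x = (0::real)" "indicator {-T<..<0} x = (0::real)"
      using False False2 by (auto simp: indicator_def)
    have z2: "indicator {-T<..<T} x * uF w1p w2p w1m w2m T (f1, f2) x = 0"
    proof (cases "x = 0")
      case True then show ?thesis by (simp add: uF_def)
    next
      case False3: False
      then have "x \<notin> {-T<..<T}" using False False2 by auto
      then show ?thesis by simp
    qed
    show ?thesis by (simp only: z1 z2 mult_zero_left add_0_left)
  qed
qed

end



context mainloc begin

lemma ind_sq: "(indicator S x * (y::real))\<^sup>2 = indicator S x * y\<^sup>2"
  by (simp add: indicator_def)

lemma fwd:
  assumes F: "F \<in> ctrl_space T"
  defines "g \<equiv> uF w1p w2p w1m w2m T F"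
  shows "sq_int {-T<..<T} g \<and> (\<integral>x. indicator {-T<..<T} x * (g x)\<^sup>2 \<partial>lborel)
     \<le> (2 + 8 * Mk\<^sup>2 * T\<^sup>2) * (\<integral>x. (trim T (fst F) x)\<^sup>2 + (trim T (snd F) x)\<^sup>2 \<partial>lborel)"
proof -
  obtain f1 f2 where Fe: "F = (f1, f2)" by (cases F)
  define p where "p = trim T f1"
  define q where "q = trim T f2"
  have mp: "p \<in> borel_measurable borel" and ip2: "integrable lborel (\<lambda>x. (p x)\<^sup>2)" and ip: "integrable lborel p"
   and mq: "q \<in> borel_measurable borel" and iq2: "integrable lborel (\<lambda>x. (q x)\<^sup>2)" and iq: "integrable lborel q"
    using ctrl_trim[OF F] unfolding Fe p_def q_def by auto
  define A where "A = Vop a1 a2 p q"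
  define B where "B = Vop b1 b2 p q"
  have mA: "A \<in> borel_measurable borel" unfolding A_def using Vop_meas[OF kMk(1,2)] mp mq by simp
  have mB: "B \<in> borel_measurable borel" unfolding B_def using Vop_meas[OF kMk(3,4)] mp mq by simp
  define L where "L = L1 (p, q)"
  have L0: "L \<ge> 0" unfolding L_def by (rule L1_nonneg)
  have Mk0: "Mk \<ge> 0" using kern_M[OF kMk(1)] .
  have LL: "(\<integral>s. \<bar>p s\<bar> + \<bar>q s\<bar> \<partial>lborel) = L" unfolding L_def L1_def Nrm_def by simp
  have bA: "\<bar>A t\<bar> \<le> Mk * L" for t
  proof -
    have "\<bar>A t\<bar> \<le> Mk * L * indicator {0..T} t" using Vop_bound2[OF kMk(1,2) ip iq, of t] unfolding A_def LL .
    also have "\<dots> \<le> Mk * L" using Mk0 L0 by (simp add: indicator_def)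
    finally show ?thesis .
  qed
  have bB: "\<bar>B t\<bar> \<le> Mk * L" for t
  proof -
    have "\<bar>B t\<bar> \<le> Mk * L * indicator {0..T} t" using Vop_bound2[OF kMk(3,4) ip iq, of t] unfolding B_def LL .
    also have "\<dots> \<le> Mk * L" using Mk0 L0 by (simp add: indicator_def)
    finally show ?thesis .
  qed
  have Ge: "indicator {-T<..<T} x * g x =
    indicator {0<..<T} x * ((1/2) * p (T - x) - (1/2) * q (T - x) + A (T - x))
  + indicator {-T<..<0} x * (-(1/2) * p (T + x) - (1/2) * q (T + x) + B (T + x))" for x
    unfolding g_def Fe p_def q_def A_def B_def by (rule Geq) (use ip iq in \<open>simp_all add: p_def q_def\<close>)
  note [measurable] = mp mq mA mB
  have mG: "(\<lambda>x. indicator {-T<..<T} x * g x) \<in> borel_measurable borel"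
    unfolding Ge by measurable
  define \<Psi> where "\<Psi> \<tau> = (p \<tau>)\<^sup>2 + (q \<tau>)\<^sup>2 + 2 * (Mk * L)\<^sup>2" for \<tau>
  have \<Psi>0: "\<Psi> \<tau> \<ge> 0" for \<tau> unfolding \<Psi>_def by simp
  have bnd: "(indicator {-T<..<T} x * g x)\<^sup>2 \<le> indicator {0<..<T} x * \<Psi> (T - x) + indicator {-T<..<0} x * \<Psi> (T + x)" for x
  proof (cases "0 < x \<and> x < T")
    case True
    have "((1/2) * p (T - x) - (1/2) * q (T - x) + A (T - x))\<^sup>2 \<le> (p (T - x))\<^sup>2 + (q (T - x))\<^sup>2 + 2 * (A (T - x))\<^sup>2"
      by (rule sq_ineq1)
    also have "(A (T - x))\<^sup>2 \<le> (Mk * L)\<^sup>2" by (rule sq_mono_abs[OF bA])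
    finally show ?thesis using True unfolding Ge \<Psi>_def by (simp add: indicator_def)
  next
    case False
    show ?thesis
    proof (cases "-T < x \<and> x < 0")
      case True
      have "(-(1/2) * p (T + x) - (1/2) * q (T + x) + B (T + x))\<^sup>2 \<le> (p (T + x))\<^sup>2 + (q (T + x))\<^sup>2 + 2 * (B (T + x))\<^sup>2"
        by (rule sq_ineq2)
      also have "(B (T + x))\<^sup>2 \<le> (Mk * L)\<^sup>2" by (rule sq_mono_abs[OF bB])
      finally show ?thesis using True unfolding Ge \<Psi>_def by (simp add: indicator_def)
    next
      case False2: False
      then show ?thesis using False unfolding Ge by (auto simp: indicator_def \<Psi>0)
    qed
  qed
  have indT: "integrable lborel (\<lambda>x. indicator {0<..<T} x * \<Psi> x)"
  proof -
    have e: "(\<lambda>x. indicator {0<..<T} x * \<Psi> x) = (\<lambda>x. indicator {0<..<T} x * (p x)\<^sup>2 + indicator {0<..<T} x * (q x)\<^sup>2 + 2 * (Mk * L)\<^sup>2 * indicator {0<..<T} x)"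
      by (simp add: fun_eq_iff \<Psi>_def algebra_simps)
    show ?thesis unfolding e
    proof (intro Bochner_Integration.integrable_add)
      show "integrable lborel (\<lambda>x. indicator {0<..<T} x * (p x)\<^sup>2)" using int_mult_ind[OF ip2, of "{0<..<T}"] by simp
      show "integrable lborel (\<lambda>x. indicator {0<..<T} x * (q x)\<^sup>2)" using int_mult_ind[OF iq2, of "{0<..<T}"] by simp
      show "integrable lborel (\<lambda>x. 2 * (Mk * L)\<^sup>2 * indicator {0<..<T} x)"
        by (rule integrable_mult_right[OF int_ind_Ioo])
    qed
  qed
  have iP: "integrable lborel (\<lambda>x. indicator {0<..<T} x * \<Psi> (T - x) + indicator {-T<..<0} x * \<Psi> (T + x))"
    using indT cv1i[of T \<Psi>] cv2i[of T \<Psi>] by auto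
  have ig: "integrable lborel (\<lambda>x. (indicator {-T<..<T} x * g x)\<^sup>2)"
    by (rule Bochner_Integration.integrable_bound[OF iP]) (use mG bnd \<Psi>0 in auto)
  have sq: "sq_int {-T<..<T} g"
    unfolding sq_int_def set_borel_measurable_def set_integrable_def
    using mG ig by (simp add: ind_sq)
  have "(\<integral>x. indicator {-T<..<T} x * (g x)\<^sup>2 \<partial>lborel) = (\<integral>x. (indicator {-T<..<T} x * g x)\<^sup>2 \<partial>lborel)"
    by (simp add: ind_sq)
  also have "\<dots> \<le> (\<integral>x. indicator {0<..<T} x * \<Psi> (T - x) + indicator {-T<..<0} x * \<Psi> (T + x) \<partial>lborel)"
    by (rule integral_mono[OF ig iP bnd])
  also have "\<dots> = (\<integral>x. indicator {0<..<T} x * \<Psi> (T - x) \<partial>lborel) + (\<integral>x. indicator {-T<..<0} x * \<Psi> (T + x) \<partial>lborel)"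
    using indT cv1i[of T \<Psi>] cv2i[of T \<Psi>] by (intro Bochner_Integration.integral_add) auto
  also have "\<dots> = 2 * (\<integral>x. indicator {0<..<T} x * \<Psi> x \<partial>lborel)"
    unfolding cv1 cv2 by simp
  also have "(\<integral>x. indicator {0<..<T} x * \<Psi> x \<partial>lborel) = (\<integral>x. (p x)\<^sup>2 + (q x)\<^sup>2 \<partial>lborel) + 2 * (Mk * L)\<^sup>2 * T"
  proof -
    have e: "(\<lambda>x. indicator {0<..<T} x * \<Psi> x) = (\<lambda>x. ((p x)\<^sup>2 + (q x)\<^sup>2) + 2 * (Mk * L)\<^sup>2 * indicator {0<..<T} x)"
      by (simp add: fun_eq_iff \<Psi>_def algebra_simps p_def q_def trim_def indicator_def)
    have mm: "measure lborel {0<..<T} = T" using measure_lborel_Ioo[of 0 T] Tpos by (metis diff_zero less_imp_le)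
    show ?thesis unfolding e using ip2 iq2 int_ind_Ioo[of 0 T] mm by simp
  qed
  finally have I1: "(\<integral>x. indicator {-T<..<T} x * (g x)\<^sup>2 \<partial>lborel) \<le> 2 * ((\<integral>x. (p x)\<^sup>2 + (q x)\<^sup>2 \<partial>lborel) + 2 * (Mk * L)\<^sup>2 * T)" .
  have L2: "L\<^sup>2 \<le> 2 * T * (\<integral>x. (p x)\<^sup>2 + (q x)\<^sup>2 \<partial>lborel)"
    unfolding L_def by (rule L1_sq[OF Tpos]) (use mp mq ip2 iq2 in \<open>auto simp: p_def q_def trim_def\<close>)
  have "4 * Mk\<^sup>2 * T * L\<^sup>2 \<le> 4 * Mk\<^sup>2 * T * (2 * T * (\<integral>x. (p x)\<^sup>2 + (q x)\<^sup>2 \<partial>lborel))"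
    by (rule mult_left_mono[OF L2]) (use Tpos in simp)
  then have "(\<integral>x. indicator {-T<..<T} x * (g x)\<^sup>2 \<partial>lborel) \<le> (2 + 8 * Mk\<^sup>2 * T\<^sup>2) * (\<integral>x. (p x)\<^sup>2 + (q x)\<^sup>2 \<partial>lborel)"
    using I1 by (simp add: power2_eq_square algebra_simps)
  then show ?thesis using sq unfolding Fe p_def q_def by simp
qed

end



context mainloc begin

definition hh :: "(real \<Rightarrow> real) \<Rightarrow> (real \<Rightarrow> real) \<times> (real \<Rightarrow> real)" where
  "hh Gf = (\<lambda>\<tau>. indicator {0<..<T} \<tau> * (Gf (T - \<tau>) - Gf (\<tau> - T)),
            \<lambda>\<tau>. indicator {0<..<T} \<tau> * (- Gf (T - \<tau>) - Gf (\<tau> - T)))"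

lemma hh_props:
  assumes mG: "Gf \<in> borel_measurable borel" and iG: "integrable lborel (\<lambda>x. (Gf x)\<^sup>2)"
  shows "Int2 (hh Gf)" "integrable lborel (\<lambda>\<tau>. (Nrm (hh Gf) \<tau>)\<^sup>2)"
    "(\<integral>\<tau>. (Nrm (hh Gf) \<tau>)\<^sup>2 \<partial>lborel) \<le> 8 * (\<integral>x. (Gf x)\<^sup>2 \<partial>lborel)"
    "fst (hh Gf) \<in> borel_measurable borel" "snd (hh Gf) \<in> borel_measurable borel"
    "\<And>\<tau>. \<tau> \<notin> {0<..<T} \<Longrightarrow> fst (hh Gf) \<tau> = 0 \<and> snd (hh Gf) \<tau> = 0"
proof -
  note [measurable] = mG
  define u1 where "u1 \<tau> = indicator {0<..<T} \<tau> * (Gf (T - \<tau>))\<^sup>2" for \<tau>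
  define u2 where "u2 \<tau> = indicator {0<..<T} \<tau> * (Gf (\<tau> - T))\<^sup>2" for \<tau>
  have iu1: "integrable lborel u1"
  proof -
    have "integrable lborel (\<lambda>x. indicator {0<..<T} x * (Gf x)\<^sup>2)" using int_mult_ind[OF iG, of "{0<..<T}"] by simp
    then show ?thesis unfolding u1_def using cv1i[of T "\<lambda>y. (Gf y)\<^sup>2"] by simp
  qed
  have iu2: "integrable lborel u2"
  proof -
    have "integrable lborel (\<lambda>x. indicator {-T<..<0} x * (Gf x)\<^sup>2)" using int_mult_ind[OF iG, of "{-T<..<0}"] by simp
    then show ?thesis unfolding u2_def using cv2i[of T "\<lambda>y. (Gf (y - T))\<^sup>2"] by simp
  qed
  have Iu1: "integral\<^sup>L lborel u1 \<le> (\<integral>x. (Gf x)\<^sup>2 \<partial>lborel)"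
  proof -
    have "integral\<^sup>L lborel u1 = (\<integral>x. indicator {0<..<T} x * (Gf x)\<^sup>2 \<partial>lborel)"
      unfolding u1_def using cv1[of T "\<lambda>y. (Gf y)\<^sup>2"] by simp
    also have "\<dots> \<le> (\<integral>x. (Gf x)\<^sup>2 \<partial>lborel)"
      by (rule integral_mono[OF _ iG]) (use int_mult_ind[OF iG, of "{0<..<T}"] in \<open>auto simp: indicator_def\<close>)
    finally show ?thesis .
  qed
  have Iu2: "integral\<^sup>L lborel u2 \<le> (\<integral>x. (Gf x)\<^sup>2 \<partial>lborel)"
  proof -
    have "integral\<^sup>L lborel u2 = (\<integral>x. indicator {-T<..<0} x * (Gf x)\<^sup>2 \<partial>lborel)"
      unfolding u2_def using cv2[of T "\<lambda>y. (Gf (y - T))\<^sup>2"] by simp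
    also have "\<dots> \<le> (\<integral>x. (Gf x)\<^sup>2 \<partial>lborel)"
      by (rule integral_mono[OF _ iG]) (use int_mult_ind[OF iG, of "{-T<..<0}"] in \<open>auto simp: indicator_def\<close>)
    finally show ?thesis .
  qed
  show m1: "fst (hh Gf) \<in> borel_measurable borel" unfolding hh_def by simp
  show m2: "snd (hh Gf) \<in> borel_measurable borel" unfolding hh_def by simp
  show supp: "\<And>\<tau>. \<tau> \<notin> {0<..<T} \<Longrightarrow> fst (hh Gf) \<tau> = 0 \<and> snd (hh Gf) \<tau> = 0"
    unfolding hh_def by simp
  have sq1: "(fst (hh Gf) \<tau>)\<^sup>2 \<le> 2 * (u1 \<tau> + u2 \<tau>)" for \<tau>
  proof -
    have "(fst (hh Gf) \<tau>)\<^sup>2 = indicator {0<..<T} \<tau> * (Gf (T - \<tau>) - Gf (\<tau> - T))\<^sup>2"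
      unfolding hh_def by (simp add: ind_sq)
    also have "\<dots> \<le> indicator {0<..<T} \<tau> * (2 * ((Gf (T - \<tau>))\<^sup>2 + (Gf (\<tau> - T))\<^sup>2))"
    proof (rule mult_left_mono)
      have "2 * ((Gf (T - \<tau>))\<^sup>2 + (Gf (\<tau> - T))\<^sup>2) - (Gf (T - \<tau>) - Gf (\<tau> - T))\<^sup>2 = (Gf (T - \<tau>) + Gf (\<tau> - T))\<^sup>2"
        by (simp add: power2_eq_square algebra_simps)
      then show "(Gf (T - \<tau>) - Gf (\<tau> - T))\<^sup>2 \<le> 2 * ((Gf (T - \<tau>))\<^sup>2 + (Gf (\<tau> - T))\<^sup>2)"
        by (metis diff_ge_0_iff_ge zero_le_power2)
    qed simp
    also have "\<dots> = 2 * (u1 \<tau> + u2 \<tau>)" unfolding u1_def u2_def by (simp add: algebra_simps)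
    finally show ?thesis .
  qed
  have sq2: "(snd (hh Gf) \<tau>)\<^sup>2 \<le> 2 * (u1 \<tau> + u2 \<tau>)" for \<tau>
  proof -
    have "(snd (hh Gf) \<tau>)\<^sup>2 = indicator {0<..<T} \<tau> * (Gf (T - \<tau>) + Gf (\<tau> - T))\<^sup>2"
      by (simp only: hh_def snd_conv ind_sq) (simp add: power2_eq_square algebra_simps)
    also have "\<dots> \<le> indicator {0<..<T} \<tau> * (2 * ((Gf (T - \<tau>))\<^sup>2 + (Gf (\<tau> - T))\<^sup>2))"
    proof (rule mult_left_mono)
      have "2 * ((Gf (T - \<tau>))\<^sup>2 + (Gf (\<tau> - T))\<^sup>2) - (Gf (T - \<tau>) + Gf (\<tau> - T))\<^sup>2 = (Gf (T - \<tau>) - Gf (\<tau> - T))\<^sup>2"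
        by (simp add: power2_eq_square algebra_simps)
      then show "(Gf (T - \<tau>) + Gf (\<tau> - T))\<^sup>2 \<le> 2 * ((Gf (T - \<tau>))\<^sup>2 + (Gf (\<tau> - T))\<^sup>2)"
        by (metis diff_ge_0_iff_ge zero_le_power2)
    qed simp
    also have "\<dots> = 2 * (u1 \<tau> + u2 \<tau>)" unfolding u1_def u2_def by (simp add: algebra_simps)
    finally show ?thesis .
  qed
  have sqh: "(fst (hh Gf) \<tau>)\<^sup>2 + (snd (hh Gf) \<tau>)\<^sup>2 = 2 * (u1 \<tau> + u2 \<tau>)" for \<tau>
    by (simp only: hh_def fst_conv snd_conv ind_sq u1_def u2_def) (simp add: power2_eq_square algebra_simps)
  have iU: "integrable lborel (\<lambda>\<tau>. 2 * (u1 \<tau> + u2 \<tau>))" using iu1 iu2 by auto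
  have u0: "0 \<le> u1 \<tau>" "0 \<le> u2 \<tau>" for \<tau> unfolding u1_def u2_def by auto
  have ih1: "integrable lborel (fst (hh Gf))"
  proof (rule Bochner_Integration.integrable_bound[of _ "\<lambda>\<tau>. indicator {0<..<T} \<tau> + 2 * (u1 \<tau> + u2 \<tau>)"])
    show "integrable lborel (\<lambda>\<tau>. indicator {0<..<T} \<tau> + 2 * (u1 \<tau> + u2 \<tau>))"
      using iU int_ind_Ioo[of 0 T] by (rule_tac Bochner_Integration.integrable_add) auto
    show "fst (hh Gf) \<in> borel_measurable lborel" using m1 by simp
    show "AE x in lborel. norm (fst (hh Gf) x) \<le> norm (indicator {0<..<T} x + 2 * (u1 x + u2 x))"
    proof (rule AE_I2)
      fix x
      have "\<bar>fst (hh Gf) x\<bar> \<le> indicator {0<..<T} x + 2 * (u1 x + u2 x)"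
      proof (cases "x \<in> {0<..<T}")
        case True then show ?thesis using abs_le_sq1[of "fst (hh Gf) x"] sq1[of x] by simp
      next
        case False then show ?thesis using supp[OF False] u0[of x] by simp
      qed
      then show "norm (fst (hh Gf) x) \<le> norm (indicator {0<..<T} x + 2 * (u1 x + u2 x))"
        using u0[of x] by simp
    qed
  qed
  have ih2: "integrable lborel (snd (hh Gf))"
  proof (rule Bochner_Integration.integrable_bound[of _ "\<lambda>\<tau>. indicator {0<..<T} \<tau> + 2 * (u1 \<tau> + u2 \<tau>)"])
    show "integrable lborel (\<lambda>\<tau>. indicator {0<..<T} \<tau> + 2 * (u1 \<tau> + u2 \<tau>))"
      using iU int_ind_Ioo[of 0 T] by (rule_tac Bochner_Integration.integrable_add) auto
    show "snd (hh Gf) \<in> borel_measurable lborel" using m2 by simp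
    show "AE x in lborel. norm (snd (hh Gf) x) \<le> norm (indicator {0<..<T} x + 2 * (u1 x + u2 x))"
    proof (rule AE_I2)
      fix x
      have "\<bar>snd (hh Gf) x\<bar> \<le> indicator {0<..<T} x + 2 * (u1 x + u2 x)"
      proof (cases "x \<in> {0<..<T}")
        case True then show ?thesis using abs_le_sq1[of "snd (hh Gf) x"] sq2[of x] by simp
      next
        case False then show ?thesis using supp[OF False] u0[of x] by simp
      qed
      then show "norm (snd (hh Gf) x) \<le> norm (indicator {0<..<T} x + 2 * (u1 x + u2 x))"
        using u0[of x] by simp
    qed
  qed
  show "Int2 (hh Gf)" unfolding Int2_def using ih1 ih2 by simp
  have nb: "(Nrm (hh Gf) \<tau>)\<^sup>2 \<le> 4 * (u1 \<tau> + u2 \<tau>)" for \<tau>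
  proof -
    have "(Nrm (hh Gf) \<tau>)\<^sup>2 \<le> 2 * ((fst (hh Gf) \<tau>)\<^sup>2 + (snd (hh Gf) \<tau>)\<^sup>2)"
    proof -
      have "2 * ((fst (hh Gf) \<tau>)\<^sup>2 + (snd (hh Gf) \<tau>)\<^sup>2) - (Nrm (hh Gf) \<tau>)\<^sup>2 = (\<bar>fst (hh Gf) \<tau>\<bar> - \<bar>snd (hh Gf) \<tau>\<bar>)\<^sup>2"
        unfolding Nrm_def by (simp add: power2_eq_square algebra_simps)
      then show ?thesis by (metis diff_ge_0_iff_ge zero_le_power2)
    qed
    then show ?thesis using sqh[of \<tau>] by simp
  qed
  have iU4: "integrable lborel (\<lambda>\<tau>. 4 * (u1 \<tau> + u2 \<tau>))" using iu1 iu2 by auto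
  have mN: "(\<lambda>\<tau>. (Nrm (hh Gf) \<tau>)\<^sup>2) \<in> borel_measurable lborel"
    unfolding Nrm_def using m1 m2 by simp
  show iN: "integrable lborel (\<lambda>\<tau>. (Nrm (hh Gf) \<tau>)\<^sup>2)"
    by (rule Bochner_Integration.integrable_bound[OF iU4 mN]) (use nb u0 in auto)
  have "(\<integral>\<tau>. (Nrm (hh Gf) \<tau>)\<^sup>2 \<partial>lborel) \<le> (\<integral>\<tau>. 4 * (u1 \<tau> + u2 \<tau>) \<partial>lborel)"
    by (rule integral_mono[OF iN iU4 nb])
  also have "\<dots> = 4 * (integral\<^sup>L lborel u1 + integral\<^sup>L lborel u2)" using iu1 iu2 by simp
  also have "\<dots> \<le> 8 * (\<integral>x. (Gf x)\<^sup>2 \<partial>lborel)" using Iu1 Iu2 by simp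
  finally show "(\<integral>\<tau>. (Nrm (hh Gf) \<tau>)\<^sup>2 \<partial>lborel) \<le> 8 * (\<integral>x. (Gf x)\<^sup>2 \<partial>lborel)" .
qed

end



context mainloc begin

lemma Kp_expl:
  assumes "integrable lborel p" "integrable lborel q"
  shows "fst (V.Kp (p, q)) t = Vop b1 b2 p q t - Vop a1 a2 p q t"
    "snd (V.Kp (p, q)) t = Vop a1 a2 p q t + Vop b1 b2 p q t"
proof -
  have e: "fst (V.Kp (p, q)) t = Vop k11 k12 p q t" "snd (V.Kp (p, q)) t = Vop k21 k22 p q t"
    by (subst V.Kp_def, simp)+
  show "fst (V.Kp (p, q)) t = Vop b1 b2 p q t - Vop a1 a2 p q t"
    unfolding e(1) unfolding k11_def k12_def by (rule Vop_kdiff[OF kb1 ka1 kb2 ka2 assms])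
  show "snd (V.Kp (p, q)) t = Vop a1 a2 p q t + Vop b1 b2 p q t"
    unfolding e(2) unfolding k21_def k22_def by (rule Vop_kadd[OF ka1 kb1 ka2 kb2 assms])
qed

lemma eqn:
  assumes F: "F \<in> ctrl_space T"
  defines "p \<equiv> trim T (fst F)" and "q \<equiv> trim T (snd F)"
    and "Gf \<equiv> \<lambda>x. indicator {-T<..<T} x * uF w1p w2p w1m w2m T F x"
  shows "\<tau> \<noteq> 0 \<Longrightarrow> \<tau> \<noteq> T \<Longrightarrow> p \<tau> = fst (hh Gf) \<tau> + fst (V.Kp (p, q)) \<tau> \<and> q \<tau> = snd (hh Gf) \<tau> + snd (V.Kp (p, q)) \<tau>"
proof -
  assume t0: "\<tau> \<noteq> 0" and tT: "\<tau> \<noteq> T"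
  obtain f1 f2 where Fe: "F = (f1, f2)" by (cases F)
  have ip: "integrable lborel p" and iq: "integrable lborel q" using ctrl_trim[OF F] unfolding p_def q_def by auto
  have ge: "Gf x = indicator {0<..<T} x * ((1/2) * p (T - x) - (1/2) * q (T - x) + Vop a1 a2 p q (T - x))
    + indicator {-T<..<0} x * (-(1/2) * p (T + x) - (1/2) * q (T + x) + Vop b1 b2 p q (T + x))" for x
    unfolding Gf_def Fe p_def q_def fst_conv snd_conv by (rule Geq) (use ip iq in \<open>simp_all add: p_def q_def Fe\<close>)
  show ?thesis
  proof (cases "\<tau> \<in> {0<..<T}")
    case True
    have g1: "Gf (T - \<tau>) = (1/2) * p \<tau> - (1/2) * q \<tau> + Vop a1 a2 p q \<tau>"
      using ge[of "T - \<tau>"] True by (simp add: indicator_def)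
    have g2: "Gf (\<tau> - T) = -(1/2) * p \<tau> - (1/2) * q \<tau> + Vop b1 b2 p q \<tau>"
      using ge[of "\<tau> - T"] True by (simp add: indicator_def)
    have h1: "fst (hh Gf) \<tau> = Gf (T - \<tau>) - Gf (\<tau> - T)" "snd (hh Gf) \<tau> = - Gf (T - \<tau>) - Gf (\<tau> - T)"
      using True by (simp_all add: hh_def)
    show ?thesis unfolding h1 g1 g2 Kp_expl[OF ip iq] by simp
  next
    case False
    then have nT: "\<tau> \<notin> {0..T}" using t0 tT by auto
    have "p \<tau> = 0" "q \<tau> = 0" using False by (simp_all add: p_def q_def trim_def)
    moreover have "fst (hh Gf) \<tau> = 0" "snd (hh Gf) \<tau> = 0" using False by (simp_all add: hh_def)
    moreover have "fst (V.Kp (p, q)) \<tau> = 0" "snd (V.Kp (p, q)) \<tau> = 0" using V.Kp_supp[OF nT] by auto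
    ultimately show ?thesis by simp
  qed
qed

end



context mainloc begin

lemma Sol_expl: "fst (V.Sol h) t = fst h t + V.R1 h t" "snd (V.Sol h) t = snd h t + V.R2 h t"
  by (subst V.Sol_def, simp)+

lemma sqint_G:
  assumes "sq_int {-T<..<T} g"
  shows "(\<lambda>x. indicator {-T<..<T} x * g x) \<in> borel_measurable borel"
    "integrable lborel (\<lambda>x. (indicator {-T<..<T} x * g x)\<^sup>2)"
  using assms unfolding sq_int_def set_borel_measurable_def set_integrable_def by (simp_all add: ind_sq)

lemma bwd:
  assumes F: "F \<in> ctrl_space T"
  defines "g \<equiv> uF w1p w2p w1m w2m T F"
  defines "p \<equiv> trim T (fst F)" and "q \<equiv> trim T (snd F)"
  shows "(\<integral>x. (p x)\<^sup>2 + (q x)\<^sup>2 \<partial>lborel) \<le> (16 + 16 * V.Cs\<^sup>2 * T\<^sup>2) * (\<integral>x. indicator {-T<..<T} x * (g x)\<^sup>2 \<partial>lborel)"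
proof -
  define Gf where "Gf = (\<lambda>x. indicator {-T<..<T} x * g x)"
  have sq: "sq_int {-T<..<T} g" using fwd[OF F] unfolding g_def by simp
  have mG: "Gf \<in> borel_measurable borel" and iG: "integrable lborel (\<lambda>x. (Gf x)\<^sup>2)"
    using sqint_G[OF sq] unfolding Gf_def by auto
  have I: "(\<integral>x. indicator {-T<..<T} x * (g x)\<^sup>2 \<partial>lborel) = (\<integral>x. (Gf x)\<^sup>2 \<partial>lborel)"
    unfolding Gf_def by (simp add: ind_sq)
  define h where "h = hh Gf"
  note hp = hh_props[OF mG iG, folded h_def]
  have mp: "p \<in> borel_measurable borel" and ip2: "integrable lborel (\<lambda>x. (p x)\<^sup>2)" and ip: "integrable lborel p"
   and mq: "q \<in> borel_measurable borel" and iq2: "integrable lborel (\<lambda>x. (q x)\<^sup>2)" and iq: "integrable lborel q"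
    using ctrl_trim[OF F] unfolding p_def q_def by auto
  have P: "Int2 (p, q)" unfolding Int2_def using ip iq by simp
  have ae: "AE \<tau> in lborel. fst (p, q) \<tau> = fst h \<tau> + fst (V.Kp (p, q)) \<tau> \<and> snd (p, q) \<tau> = snd h \<tau> + snd (V.Kp (p, q)) \<tau>"
    using AE_lborel_singleton[of 0] AE_lborel_singleton[of T]
  proof eventually_elim
    case (elim \<tau>)
    then show ?case using eqn[OF F, of \<tau>] unfolding h_def Gf_def g_def p_def q_def by simp
  qed
  have sol: "AE \<tau> in lborel. p \<tau> = fst (V.Sol h) \<tau> \<and> q \<tau> = snd (V.Sol h) \<tau>"
    using V.sol_unique[OF P hp(1) ae] by simp
  define c where "c = V.Cs * L1 h"
  have c0: "c \<ge> 0" unfolding c_def using V.Cs_nonneg L1_nonneg by simp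
  have pw: "AE \<tau> in lborel. (p \<tau>)\<^sup>2 + (q \<tau>)\<^sup>2 \<le> 2 * (Nrm h \<tau>)\<^sup>2 + 2 * c\<^sup>2 * indicator {0..T} \<tau>"
    using sol
  proof eventually_elim
    case (elim \<tau>)
    let ?N = "Nrm h \<tau>" and ?d = "c * indicator {0..T} \<tau>"
    have d0: "?d \<ge> 0" using c0 by simp
    have "\<bar>V.R1 h \<tau>\<bar> + \<bar>V.R2 h \<tau>\<bar> \<le> ?d" using V.R_bound[OF hp(1), of \<tau>] unfolding c_def by simp
    moreover have "p \<tau> = fst h \<tau> + V.R1 h \<tau>" "q \<tau> = snd h \<tau> + V.R2 h \<tau>" using elim Sol_expl by auto
    ultimately have b: "\<bar>p \<tau>\<bar> + \<bar>q \<tau>\<bar> \<le> ?N + ?d" unfolding Nrm_def by linarith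
    have "(p \<tau>)\<^sup>2 + (q \<tau>)\<^sup>2 \<le> (\<bar>p \<tau>\<bar> + \<bar>q \<tau>\<bar>)\<^sup>2"
      by (simp add: power2_eq_square algebra_simps)
    also have "\<dots> \<le> (?N + ?d)\<^sup>2" by (rule power_mono[OF b]) simp
    also have "\<dots> \<le> 2 * ?N\<^sup>2 + 2 * ?d\<^sup>2"
    proof -
      have "2 * ?N\<^sup>2 + 2 * ?d\<^sup>2 - (?N + ?d)\<^sup>2 = (?N - ?d)\<^sup>2" by (simp add: power2_eq_square algebra_simps)
      then show ?thesis by (metis diff_ge_0_iff_ge zero_le_power2)
    qed
    also have "?d\<^sup>2 = c\<^sup>2 * indicator {0..T} \<tau>" by (simp add: indicator_def)
    finally show ?case by simp
  qed
  have iR: "integrable lborel (\<lambda>\<tau>. 2 * (Nrm h \<tau>)\<^sup>2 + 2 * c\<^sup>2 * indicator {0..T} \<tau>)"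
    using hp(2) int_ind_Icc[of 0 T] by auto
  have mmT: "measure lborel {0..T} = T" using measure_lborel_Icc[of 0 T] Tpos by (metis diff_zero less_imp_le)
  have "(\<integral>x. (p x)\<^sup>2 + (q x)\<^sup>2 \<partial>lborel) \<le> (\<integral>\<tau>. 2 * (Nrm h \<tau>)\<^sup>2 + 2 * c\<^sup>2 * indicator {0..T} \<tau> \<partial>lborel)"
    by (rule integral_mono_AE[OF _ iR pw]) (use ip2 iq2 in simp)
  also have "\<dots> = 2 * (\<integral>\<tau>. (Nrm h \<tau>)\<^sup>2 \<partial>lborel) + 2 * c\<^sup>2 * T"
    using hp(2) int_ind_Icc[of 0 T] mmT by simp
  finally have Q1: "(\<integral>x. (p x)\<^sup>2 + (q x)\<^sup>2 \<partial>lborel) \<le> 2 * (\<integral>\<tau>. (Nrm h \<tau>)\<^sup>2 \<partial>lborel) + 2 * c\<^sup>2 * T" .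
  have L1h: "(L1 h)\<^sup>2 \<le> T * (\<integral>\<tau>. (Nrm h \<tau>)\<^sup>2 \<partial>lborel)"
  proof -
    have mN: "Nrm h \<in> borel_measurable lborel" unfolding Nrm_def[abs_def] using hp(4,5) by simp
    have "(\<integral>x. \<bar>Nrm h x\<bar> \<partial>lborel)\<^sup>2 \<le> T * (\<integral>\<tau>. (Nrm h \<tau>)\<^sup>2 \<partial>lborel)"
      by (rule cs_lite[OF Tpos mN hp(2)]) (use hp(6) in \<open>simp add: Nrm_def\<close>)
    moreover have "(\<integral>x. \<bar>Nrm h x\<bar> \<partial>lborel) = L1 h" unfolding L1_def Nrm_def[abs_def] by simp
    ultimately show ?thesis by simp
  qed
  define J where "J = (\<integral>x. (Gf x)\<^sup>2 \<partial>lborel)"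
  have N8: "(\<integral>\<tau>. (Nrm h \<tau>)\<^sup>2 \<partial>lborel) \<le> 8 * J" unfolding J_def using hp(3) .
  have c2: "c\<^sup>2 \<le> V.Cs\<^sup>2 * (T * (8 * J))"
  proof -
    have "c\<^sup>2 = V.Cs\<^sup>2 * (L1 h)\<^sup>2" unfolding c_def by (simp add: power_mult_distrib)
    also have "\<dots> \<le> V.Cs\<^sup>2 * (T * (\<integral>\<tau>. (Nrm h \<tau>)\<^sup>2 \<partial>lborel))" by (rule mult_left_mono[OF L1h]) simp
    also have "\<dots> \<le> V.Cs\<^sup>2 * (T * (8 * J))" using N8 Tpos by (intro mult_left_mono) auto
    finally show ?thesis .
  qed
  have "2 * c\<^sup>2 * T \<le> 2 * (V.Cs\<^sup>2 * (T * (8 * J))) * T"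
    using mult_right_mono[OF c2, of T] Tpos by (simp add: mult_ac)
  then have "(\<integral>x. (p x)\<^sup>2 + (q x)\<^sup>2 \<partial>lborel) \<le> (16 + 16 * V.Cs\<^sup>2 * T\<^sup>2) * J"
    using Q1 N8 by (simp add: power2_eq_square algebra_simps)
  then show ?thesis unfolding I J_def .
qed

end



context mainloc begin

lemma lin:
  assumes F: "F \<in> ctrl_space T" and G: "G \<in> ctrl_space T" and x: "x \<in> {-T<..<T}" "x \<noteq> 0"
  shows "uF w1p w2p w1m w2m T (\<lambda>t. a * fst F t + b * fst G t, \<lambda>t. a * snd F t + b * snd G t) x
    = a * uF w1p w2p w1m w2m T F x + b * uF w1p w2p w1m w2m T G x"
proof -
  obtain f1 f2 where Fe: "F = (f1, f2)" by (cases F)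
  obtain g1 g2 where Ge: "G = (g1, g2)" by (cases G)
  have i: "integrable lborel (trim T f1)" "integrable lborel (trim T f2)"
    "integrable lborel (trim T g1)" "integrable lborel (trim T g2)"
    using ctrl_trim[OF F] ctrl_trim[OF G] unfolding Fe Ge by auto
  have tr: "trim T (\<lambda>t. a * f1 t + b * g1 t) = (\<lambda>s. a * trim T f1 s + b * trim T g1 s)"
    "trim T (\<lambda>t. a * f2 t + b * g2 t) = (\<lambda>s. a * trim T f2 s + b * trim T g2 s)"
    by (simp_all add: trim_def fun_eq_iff algebra_simps)
  have ic: "integrable lborel (trim T (\<lambda>t. a * f1 t + b * g1 t))" "integrable lborel (trim T (\<lambda>t. a * f2 t + b * g2 t))"
    unfolding tr using i by auto
  show ?thesis
  proof (cases "0 < x")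
    case True
    then have x': "0 < x" "x < T" using x by auto
    show ?thesis unfolding Fe Ge fst_conv snd_conv
      unfolding rep_pos[OF ic x'] rep_pos[OF i(1,2) x'] rep_pos[OF i(3,4) x'] tr
      unfolding Vop_lin[OF kMk(1,2) i] by (simp add: algebra_simps)
  next
    case False
    then have x': "-T < x" "x < 0" using x by auto
    show ?thesis unfolding Fe Ge fst_conv snd_conv
      unfolding rep_neg[OF ic x'] rep_neg[OF i(1,2) x'] rep_neg[OF i(3,4) x'] tr
      unfolding Vop_lin[OF kMk(3,4) i] by (simp add: algebra_simps)
  qed
qed

lemma surj:
  assumes sq: "sq_int {-T<..<T} g"
  shows "\<exists>F \<in> ctrl_space T. AE x in lborel. x \<in> {-T<..<T} \<longrightarrow> uF w1p w2p w1m w2m T F x = g x"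
proof -
  define Gf where "Gf = (\<lambda>x. indicator {-T<..<T} x * g x)"
  have mG: "Gf \<in> borel_measurable borel" and iG: "integrable lborel (\<lambda>x. (Gf x)\<^sup>2)"
    using sqint_G[OF sq] unfolding Gf_def by auto
  define h where "h = hh Gf"
  note hp = hh_props[OF mG iG, folded h_def]
  define s1 where "s1 = fst (V.Sol h)"
  define s2 where "s2 = snd (V.Sol h)"
  have SI: "Int2 (s1, s2)" using V.Sol_Int2[OF hp(1)] unfolding s1_def s2_def by simp
  have is1: "integrable lborel s1" and is2: "integrable lborel s2" using SI unfolding Int2_def by auto
  define c where "c = V.Cs * L1 h"
  have c0: "c \<ge> 0" unfolding c_def using V.Cs_nonneg L1_nonneg by simp
  have sb: "\<bar>s1 \<tau>\<bar> + \<bar>s2 \<tau>\<bar> \<le> Nrm h \<tau> + c * indicator {0..T} \<tau>" for \<tau>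
  proof -
    have "\<bar>V.R1 h \<tau>\<bar> + \<bar>V.R2 h \<tau>\<bar> \<le> c * indicator {0..T} \<tau>" using V.R_bound[OF hp(1), of \<tau>] unfolding c_def by simp
    moreover have "s1 \<tau> = fst h \<tau> + V.R1 h \<tau>" "s2 \<tau> = snd h \<tau> + V.R2 h \<tau>" unfolding s1_def s2_def using Sol_expl by auto
    ultimately show ?thesis unfolding Nrm_def by linarith
  qed
  have supp: "s1 \<tau> = 0 \<and> s2 \<tau> = 0" if "\<tau> \<notin> {0..T}" for \<tau>
  proof -
    have "Nrm h \<tau> = 0" using hp(6)[of \<tau>] that by (auto simp: Nrm_def)
    moreover have "indicator {0..T} \<tau> = (0::real)" using that by simp
    ultimately have "\<bar>s1 \<tau>\<bar> + \<bar>s2 \<tau>\<bar> \<le> 0" using sb[of \<tau>] by simp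
    then have "\<bar>s1 \<tau>\<bar> = 0" "\<bar>s2 \<tau>\<bar> = 0" using abs_ge_zero[of "s1 \<tau>"] abs_ge_zero[of "s2 \<tau>"] by linarith+
    then show ?thesis by simp
  qed
  have iB: "integrable lborel (\<lambda>\<tau>. 2 * (Nrm h \<tau>)\<^sup>2 + 2 * c\<^sup>2 * indicator {0..T} \<tau>)"
    using hp(2) int_ind_Icc[of 0 T] by auto
  have sqb: "(s1 \<tau>)\<^sup>2 \<le> 2 * (Nrm h \<tau>)\<^sup>2 + 2 * c\<^sup>2 * indicator {0..T} \<tau>"
     "(s2 \<tau>)\<^sup>2 \<le> 2 * (Nrm h \<tau>)\<^sup>2 + 2 * c\<^sup>2 * indicator {0..T} \<tau>" for \<tau>
  proof -
    let ?N = "Nrm h \<tau>" and ?d = "c * indicator {0..T} \<tau>"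
    have d0: "?d \<ge> 0" using c0 by simp
    have N0: "?N \<ge> 0" by (simp add: Nrm_def)
    have e: "(?N + ?d)\<^sup>2 \<le> 2 * ?N\<^sup>2 + 2 * c\<^sup>2 * indicator {0..T} \<tau>"
    proof -
      have "2 * ?N\<^sup>2 + 2 * ?d\<^sup>2 - (?N + ?d)\<^sup>2 = (?N - ?d)\<^sup>2" by (simp add: power2_eq_square algebra_simps)
      then have "(?N + ?d)\<^sup>2 \<le> 2 * ?N\<^sup>2 + 2 * ?d\<^sup>2" by (metis diff_ge_0_iff_ge zero_le_power2)
      moreover have "?d\<^sup>2 = c\<^sup>2 * indicator {0..T} \<tau>" by (simp add: indicator_def)
      ultimately show ?thesis by simp
    qed
    have "\<bar>s1 \<tau>\<bar> \<le> ?N + ?d" "\<bar>s2 \<tau>\<bar> \<le> ?N + ?d" using sb[of \<tau>] by linarith+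
    then have "(s1 \<tau>)\<^sup>2 \<le> (?N + ?d)\<^sup>2" "(s2 \<tau>)\<^sup>2 \<le> (?N + ?d)\<^sup>2" by (auto intro: sq_mono_abs)
    then show "(s1 \<tau>)\<^sup>2 \<le> 2 * (Nrm h \<tau>)\<^sup>2 + 2 * c\<^sup>2 * indicator {0..T} \<tau>"
      "(s2 \<tau>)\<^sup>2 \<le> 2 * (Nrm h \<tau>)\<^sup>2 + 2 * c\<^sup>2 * indicator {0..T} \<tau>" using e by linarith+
  qed
  have nB: "0 \<le> 2 * (Nrm h \<tau>)\<^sup>2 + 2 * c\<^sup>2 * indicator {0..T} \<tau>" for \<tau> by simp
  have ms1: "s1 \<in> borel_measurable borel" and ms2: "s2 \<in> borel_measurable borel" using is1 is2 by auto
  have i1: "integrable lborel (\<lambda>x. (s1 x)\<^sup>2)"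
    by (rule Bochner_Integration.integrable_bound[OF iB]) (use ms1 sqb nB in auto)
  have i2: "integrable lborel (\<lambda>x. (s2 x)\<^sup>2)"
    by (rule Bochner_Integration.integrable_bound[OF iB]) (use ms2 sqb nB in auto)
  have sqs: "sq_int {0<..<T} s1" "sq_int {0<..<T} s2"
    unfolding sq_int_def set_borel_measurable_def set_integrable_def
    using ms1 ms2 int_mult_ind[OF i1, of "{0<..<T}"] int_mult_ind[OF i2, of "{0<..<T}"] by auto
  have Fc: "(s1, s2) \<in> ctrl_space T" unfolding ctrl_space_def using sqs by simp
  have it: "integrable lborel (trim T s1)" "integrable lborel (trim T s2)"
    using sq_int_trim[OF sqs(1)] sq_int_trim[OF sqs(2)] by auto
  have mt: "trim T s1 \<in> borel_measurable borel" "trim T s2 \<in> borel_measurable borel"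
    using sq_int_trim[OF sqs(1)] sq_int_trim[OF sqs(2)] by auto
  have aet: "AE s in lborel. trim T s1 s = s1 s" "AE s in lborel. trim T s2 s = s2 s"
  proof -
    have pt: "trim T s1 s = s1 s \<and> trim T s2 s = s2 s" if "s \<noteq> 0" "s \<noteq> T" for s
    proof (cases "s \<in> {0<..<T}")
      case True then show ?thesis by (simp add: trim_def)
    next
      case False
      then have "s \<notin> {0..T}" using that by auto
      then show ?thesis using supp False by (simp add: trim_def)
    qed
    show "AE s in lborel. trim T s1 s = s1 s" "AE s in lborel. trim T s2 s = s2 s"
      using AE_lborel_singleton[of 0] AE_lborel_singleton[of T] by (eventually_elim, simp add: pt)+
  qed
  have VA: "Vop a1 a2 (trim T s1) (trim T s2) t = Vop a1 a2 s1 s2 t" for t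
    by (rule Vop_cong_AE[OF kMk(1,2)]) (use mt ms1 ms2 aet in auto)
  have VB: "Vop b1 b2 (trim T s1) (trim T s2) t = Vop b1 b2 s1 s2 t" for t
    by (rule Vop_cong_AE[OF kMk(3,4)]) (use mt ms1 ms2 aet in auto)
  have Seq: "s1 t = fst h t + (Vop b1 b2 s1 s2 t - Vop a1 a2 s1 s2 t)" "s2 t = snd h t + (Vop a1 a2 s1 s2 t + Vop b1 b2 s1 s2 t)" for t
  proof -
    have S: "V.Sol h = (s1, s2)" unfolding s1_def s2_def by simp
    show "s1 t = fst h t + (Vop b1 b2 s1 s2 t - Vop a1 a2 s1 s2 t)"
      using V.Sol_eq(1)[OF hp(1), of t] unfolding S using Kp_expl[OF is1 is2, of t] by simp
    show "s2 t = snd h t + (Vop a1 a2 s1 s2 t + Vop b1 b2 s1 s2 t)"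
      using V.Sol_eq(2)[OF hp(1), of t] unfolding S using Kp_expl[OF is1 is2, of t] by simp
  qed
  have "AE x in lborel. x \<in> {-T<..<T} \<longrightarrow> uF w1p w2p w1m w2m T (s1, s2) x = g x"
    using AE_lborel_singleton[of 0]
  proof eventually_elim
    case (elim x)
    show ?case
    proof
      assume xT: "x \<in> {-T<..<T}"
      show "uF w1p w2p w1m w2m T (s1, s2) x = g x"
      proof (cases "0 < x")
        case True
        then have x': "0 < x" "x < T" using xT by auto
        have h1: "fst h (T - x) = Gf x - Gf (- x)" "snd h (T - x) = - Gf x - Gf (- x)"
          using x' unfolding h_def hh_def by simp_all
        have "Gf x = g x" unfolding Gf_def using xT by simp
        then show ?thesis unfolding rep_pos[OF it x'] VA using Seq[of "T - x"] h1 by (simp add: algebra_simps)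
      next
        case False
        then have x': "-T < x" "x < 0" using xT elim by auto
        have h1: "fst h (T + x) = Gf (- x) - Gf x" "snd h (T + x) = - Gf (- x) - Gf x"
          using x' unfolding h_def hh_def by simp_all
        have "Gf x = g x" unfolding Gf_def using xT by simp
        then show ?thesis unfolding rep_neg[OF it x'] VB using Seq[of "T + x"] h1 by (simp add: algebra_simps)
      qed
    qed
  qed
  then show ?thesis using Fc by blast
qed

end



theorem mainTheorem3:
  fixes w1p w2p w1m w2m :: "real \<Rightarrow> real \<Rightarrow> real" and T :: real
  assumes cp1: "continuous_on {(x, t). 0 \<le> x \<and> x \<le> t} (\<lambda>(x, t). w1p x t)"
      and cp2: "continuous_on {(x, t). 0 \<le> x \<and> x \<le> t} (\<lambda>(x, t). w2p x t)"
      and cm1: "continuous_on {(x, t). -t \<le> x \<and> x \<le> 0} (\<lambda>(x, t). w1m x t)"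
      and cm2: "continuous_on {(x, t). -t \<le> x \<and> x \<le> 0} (\<lambda>(x, t). w2m x t)"
      and T: "T > 0"
  defines "W \<equiv> uF w1p w2p w1m w2m T"
  shows
    \<comment> \<open>W^T maps F^T into L2(-T,T)\<close>
    "(\<forall>F \<in> ctrl_space T. sq_int {-T<..<T} (W F))
     \<comment> \<open>linearity\<close>
     \<and> (\<forall>F \<in> ctrl_space T. \<forall>G \<in> ctrl_space T. \<forall>a b :: real.
          AE x in lborel. x \<in> {-T<..<T} \<longrightarrow>
            W (\<lambda>t. a * fst F t + b * fst G t, \<lambda>t. a * snd F t + b * snd G t) x
              = a * W F x + b * W G x)
     \<comment> \<open>boundedness\<close>
     \<and> (\<exists>C. \<forall>F \<in> ctrl_space T. l2_norm {-T<..<T} (W F) \<le> C * ctrl_norm T F)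
     \<comment> \<open>injectivity (modulo null sets)\<close>
     \<and> (\<forall>F \<in> ctrl_space T. (AE x in lborel. x \<in> {-T<..<T} \<longrightarrow> W F x = 0) \<longrightarrow>
          (AE t in lborel. t \<in> {0<..<T} \<longrightarrow> fst F t = 0 \<and> snd F t = 0))
     \<comment> \<open>surjectivity: the reachable set is all of L2(-T,T)\<close>
     \<and> (\<forall>g. sq_int {-T<..<T} g \<longrightarrow>
          (\<exists>F \<in> ctrl_space T. AE x in lborel. x \<in> {-T<..<T} \<longrightarrow> W F x = g x))
     \<comment> \<open>bounded inverse\<close>
     \<and> (\<exists>C. \<forall>F \<in> ctrl_space T. ctrl_norm T F \<le> C * l2_norm {-T<..<T} (W F))"
proof -
  interpret mainloc w1p w2p w1m w2m T
    by unfold_locales (use cp1 cp2 cm1 cm2 T in auto)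
  have P1: "\<forall>F \<in> ctrl_space T. sq_int {-T<..<T} (W F)"
    unfolding W_def using fwd by blast
  have P2: "\<forall>F \<in> ctrl_space T. \<forall>G \<in> ctrl_space T. \<forall>a b :: real.
          AE x in lborel. x \<in> {-T<..<T} \<longrightarrow>
            W (\<lambda>t. a * fst F t + b * fst G t, \<lambda>t. a * snd F t + b * snd G t) x
              = a * W F x + b * W G x"
  proof (intro ballI allI)
    fix F G a b assume F: "F \<in> ctrl_space T" and G: "G \<in> ctrl_space T"
    show "AE x in lborel. x \<in> {-T<..<T} \<longrightarrow>
            W (\<lambda>t. a * fst F t + b * fst G t, \<lambda>t. a * snd F t + b * snd G t) x
              = a * W F x + b * W G x"
      using AE_lborel_singleton[of 0] by eventually_elim (use lin[OF F G] in \<open>simp add: W_def\<close>)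
  qed
  have P3: "\<exists>C. \<forall>F \<in> ctrl_space T. l2_norm {-T<..<T} (W F) \<le> C * ctrl_norm T F"
  proof (intro exI ballI)
    fix F assume F: "F \<in> ctrl_space T"
    let ?Q = "\<integral>x. (trim T (fst F) x)\<^sup>2 + (trim T (snd F) x)\<^sup>2 \<partial>lborel"
    have "l2_norm {-T<..<T} (W F) = sqrt (\<integral>x. indicator {-T<..<T} x * (W F x)\<^sup>2 \<partial>lborel)"
      by (rule l2_norm_ind)
    also have "\<dots> \<le> sqrt ((2 + 8 * Mk\<^sup>2 * T\<^sup>2) * ?Q)"
      using fwd[OF F] unfolding W_def by simp
    also have "\<dots> = sqrt (2 + 8 * Mk\<^sup>2 * T\<^sup>2) * ctrl_norm T F"
      by (simp add: ctrl_norm_trim real_sqrt_mult)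
    finally show "l2_norm {-T<..<T} (W F) \<le> sqrt (2 + 8 * Mk\<^sup>2 * T\<^sup>2) * ctrl_norm T F" .
  qed
  have P6: "\<forall>F \<in> ctrl_space T. ctrl_norm T F \<le> sqrt (16 + 16 * V.Cs\<^sup>2 * T\<^sup>2) * l2_norm {-T<..<T} (W F)"
  proof
    fix F assume F: "F \<in> ctrl_space T"
    let ?Q = "\<integral>x. (trim T (fst F) x)\<^sup>2 + (trim T (snd F) x)\<^sup>2 \<partial>lborel"
    have "ctrl_norm T F = sqrt ?Q" by (rule ctrl_norm_trim)
    also have "\<dots> \<le> sqrt ((16 + 16 * V.Cs\<^sup>2 * T\<^sup>2) * (\<integral>x. indicator {-T<..<T} x * (W F x)\<^sup>2 \<partial>lborel))"
      using bwd[OF F] unfolding W_def by simp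
    also have "\<dots> = sqrt (16 + 16 * V.Cs\<^sup>2 * T\<^sup>2) * l2_norm {-T<..<T} (W F)"
      by (simp add: l2_norm_ind real_sqrt_mult)
    finally show "ctrl_norm T F \<le> sqrt (16 + 16 * V.Cs\<^sup>2 * T\<^sup>2) * l2_norm {-T<..<T} (W F)" .
  qed
  have P4: "\<forall>F \<in> ctrl_space T. (AE x in lborel. x \<in> {-T<..<T} \<longrightarrow> W F x = 0) \<longrightarrow>
          (AE t in lborel. t \<in> {0<..<T} \<longrightarrow> fst F t = 0 \<and> snd F t = 0)"
  proof (intro ballI impI)
    fix F assume F: "F \<in> ctrl_space T" and z: "AE x in lborel. x \<in> {-T<..<T} \<longrightarrow> W F x = 0"
    let ?Q = "\<integral>x. (trim T (fst F) x)\<^sup>2 + (trim T (snd F) x)\<^sup>2 \<partial>lborel"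
    have "(\<integral>x. indicator {-T<..<T} x * (W F x)\<^sup>2 \<partial>lborel) = 0"
      by (rule integral_eq_zero_AE) (use z in \<open>eventually_elim, auto simp: indicator_def\<close>)
    then have "?Q \<le> 0" using bwd[OF F] unfolding W_def by simp
    moreover have "?Q \<ge> 0" by (rule integral_nonneg_AE) auto
    ultimately have Q0: "?Q = 0" by simp
    have iQ: "integrable lborel (\<lambda>x. (trim T (fst F) x)\<^sup>2 + (trim T (snd F) x)\<^sup>2)"
      using ctrl_trim[OF F] by auto
    have "AE x in lborel. (trim T (fst F) x)\<^sup>2 + (trim T (snd F) x)\<^sup>2 = 0"
      using integral_nonneg_eq_0_iff_AE[OF iQ] Q0 by simp
    then show "AE t in lborel. t \<in> {0<..<T} \<longrightarrow> fst F t = 0 \<and> snd F t = 0"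
      by eventually_elim (auto simp: trim_def add_nonneg_eq_0_iff)
  qed
  have P5: "\<forall>g. sq_int {-T<..<T} g \<longrightarrow>
          (\<exists>F \<in> ctrl_space T. AE x in lborel. x \<in> {-T<..<T} \<longrightarrow> W F x = g x)"
    unfolding W_def using surj by blast
  show ?thesis using P1 P2 P3 P4 P5 P6 by blast
qed


end
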